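(* Let $G$ be a discrete submonoid of $\mathbb R_{\ge0}$. Let $(C,\{\mathfrak m_k\}_{k\ge0})$ be a $G$-gapped filtered $A_\infty$ algebra over $\Lambda_0^{\mathbb Z_2}$ and $(D,\{\mathfrak n_k\}_{k\ge0})$ a $G$-gapped right filtered $A_\infty$ module over it. Suppose ${\bf 1}\in D$ is a $G$-gapped cyclic element. Then there exists a unique $G$-gapped bounding cochain $b$ of $(C,\{\mathfrak m_k\})$ such that $$d^b({\bf 1}):=\sum_{k=0}^\infty\mathfrak n_k({\bf 1};b,\dots,b)=0.$$
   Context: $\Lambda_0^{\mathbb Z_2}$ is the ring of formal sums $\sum_i a_iT^{\lambda_i}$, $a_i\in\mathbb Z_2$, $0\le\lambda_0<\lambda_1<\cdots\to\infty$; $\Lambda_+^{\mathbb Z_2}$ is the ideal of sums with all exponents $>0$. A discrete submonoid $G\subset\mathbb R_{\ge0}$ is a discrete subset containing $0$ and closed under addition. $C$ (resp. $D$) is the $T$-adic completion of $\overline C\otimes\Lambda_0^{\mathbb Z_2}$ (resp. $\overline D\otimes\Lambda_0^{\mathbb Z_2}$) for $\mathbb Z_2$-vector spaces $\overline C,\overline D$. An element $x$ is $G$-gapped if $x=\sum_{\lambda\in G}T^\lambda x_\lambda$ with $x_\lambda\in\overline C$; a $\Lambda_0$-(multi)linear map is $G$-gapped if it equals $\sum_{\lambda\in G}T^\lambda\varphi_\lambda$ with $\varphi_\lambda$ $\mathbb Z_2$-(multi)linear on the $\overline{\ \cdot\ }$ spaces. A $G$-gapped filtered $A_\infty$ algebra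 is a family of $G$-gapped maps $\mathfrak m_k:C^{\otimes k}\to C$, $k\ge0$, with $\mathfrak m_0\equiv0\bmod\Lambda_+^{\mathbb Z_2}$, satisfying for all $k\ge0$ and $x_1,\dots,x_k$: $\sum_{1\le i\le j+1\le k+1}\mathfrak m_{k-j+i}(x_1,\dots,x_{i-1},\mathfrak m_{j-i+1}(x_i,\dots,x_j),x_{j+1},\dots,x_k)=0$ (no signs over $\mathbb Z_2$; $j=i-1$ inserts $\mathfrak m_0$). A $G$-gapped right filtered $A_\infty$ module is a family of $G$-gapped maps $\mathfrak n_k:D\otimes C^{\otimes k}\to D$, $k\ge0$, with, for all $k\ge0$: $\sum_{\ell=0}^k\mathfrak n_{k-\ell}(\mathfrak n_\ell(y;x_1,\dots,x_\ell);x_{\ell+1},\dots,x_k)+\sum_{1\le i\le j+1\le k+1}\mathfrak n_{k-j+i-1}(y;x_1,\dots,x_{i-1},\mathfrak m_{j-i+1}(x_i,\dots,x_j),x_{j+1},\dots,x_k)=0$. An element ${\bf 1}\in D$ is a cyclic element if (1) the map $C\to D$, $x\mapsto\mathfrak n_1({\bf 1};x)$, is a $\Lambda_0^{\mathbb Z_2}$-module isomorphism, and (2) $\mathfrak n_0({\bf 1})\equiv0\bmod\Lambda_+^{\mathbb Z_2}$. A bounding cochain is $b\in C\otimes_{\Lambda_0}\Lambda_+^{\mathbb Z_2}$ with $\sum_{k\ge0}\mathfrak m_k(b,\dots,b)=0$ (the sums converge $T$-adically). *)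

theory Defs
  imports Complex_Main "HOL-Library.Function_Algebras"
begin

text \<open>A Z2-vector space is an abelian group in which v + v = 0
(Z2-linear = additive).  An element of the T-adic completion C of
Cbar (x) Lambda_0 is the family of its coefficients: a function
real => Cbar, vanishing at negative exponents, with only finitely many
nonzero coefficients below any bound.\<close>

definition discrete_submonoid :: "real set \<Rightarrow> bool" where
  "discrete_submonoid G \<longleftrightarrow> 0 \<in> G \<and> G \<subseteq> {0..} \<and> (\<forall>a\<in>G. \<forall>b\<in>G. a + b \<in> G)
     \<and> (\<forall>c. finite (G \<inter> {..c}))"

definition nov :: "(real \<Rightarrow> 'a::zero) set" where
  "nov = {f. (\<forall>\<nu><0. f \<nu> = 0) \<and> (\<forall>c. finite {\<nu>. \<nu> \<le> c \<and> f \<nu> \<noteq> 0})}"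

definition gapped :: "real set \<Rightarrow> (real \<Rightarrow> 'a::zero) \<Rightarrow> bool" where
  "gapped G f \<longleftrightarrow> (\<forall>\<nu>. f \<nu> \<noteq> 0 \<longrightarrow> \<nu> \<in> G)"

definition multiadd :: "('a::plus list \<Rightarrow> 'b::plus) \<Rightarrow> bool" where
  "multiadd F \<longleftrightarrow> (\<forall>xs i a b. i < length xs \<longrightarrow>
      F (xs[i := a + b]) = F (xs[i := a]) + F (xs[i := b]))"

definition modadd :: "('d::plus \<Rightarrow> 'c::plus list \<Rightarrow> 'd) \<Rightarrow> bool" where
  "modadd F \<longleftrightarrow> (\<forall>y y' xs. F (y + y') xs = F y xs + F y' xs) \<and> (\<forall>y. multiadd (F y))"

text \<open>The G-gapped map sum_{l in G} T^l m k l : C^k -> C, extended to C.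
  The coefficient at nu collects all l in G and exponents mu_i of the inputs with
  l + sum mu_i = nu.\<close>
definition ext_alg :: "real set \<Rightarrow> (nat \<Rightarrow> real \<Rightarrow> 'c list \<Rightarrow> 'c) \<Rightarrow> (real \<Rightarrow> 'c) list
    \<Rightarrow> real \<Rightarrow> 'c::comm_monoid_add" where
  "ext_alg G m xs = (\<lambda>\<nu>. \<Sum>(l, ms) \<in> {(l, ms). l \<in> G \<and> length ms = length xs
        \<and> (\<forall>i<length xs. (xs ! i) (ms ! i) \<noteq> 0) \<and> l + sum_list ms = \<nu>}.
      m (length xs) l (map (\<lambda>(x, \<mu>). x \<mu>) (zip xs ms)))"

text \<open>The G-gapped module map sum_{l in G} T^l n k l : D (x) C^k -> D, extended.\<close>
definition ext_mod :: "real set \<Rightarrow> (nat \<Rightarrow> real \<Rightarrow> 'd \<Rightarrow> 'c list \<Rightarrow> 'd) \<Rightarrow> (real \<Rightarrow> 'd)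
    \<Rightarrow> (real \<Rightarrow> 'c::zero) list \<Rightarrow> real \<Rightarrow> 'd::comm_monoid_add" where
  "ext_mod G n y xs = (\<lambda>\<nu>. \<Sum>(l, \<mu>, ms) \<in> {(l, \<mu>, ms). l \<in> G \<and> y \<mu> \<noteq> 0
        \<and> length ms = length xs
        \<and> (\<forall>i<length xs. (xs ! i) (ms ! i) \<noteq> 0) \<and> l + \<mu> + sum_list ms = \<nu>}.
      n (length xs) l (y \<mu>) (map (\<lambda>(x, \<mu>). x \<mu>) (zip xs ms)))"

definition ainf_alg :: "real set \<Rightarrow> (nat \<Rightarrow> real \<Rightarrow> 'c list \<Rightarrow> 'c::ab_group_add) \<Rightarrow> bool" where
  "ainf_alg G m \<longleftrightarrow> (\<forall>k l. multiadd (m k l)) \<and> ext_alg G m [] 0 = 0 \<and>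
     (\<forall>xs. set xs \<subseteq> nov \<longrightarrow>
        (\<Sum>a\<le>length xs. \<Sum>b\<in>{a..length xs}.
           ext_alg G m (take a xs @ [ext_alg G m (take (b - a) (drop a xs))] @ drop b xs)) = 0)"

definition ainf_mod :: "real set \<Rightarrow> (nat \<Rightarrow> real \<Rightarrow> 'c list \<Rightarrow> 'c::ab_group_add)
    \<Rightarrow> (nat \<Rightarrow> real \<Rightarrow> 'd \<Rightarrow> 'c list \<Rightarrow> 'd::ab_group_add) \<Rightarrow> bool" where
  "ainf_mod G m n \<longleftrightarrow> (\<forall>k l. modadd (n k l)) \<and>
     (\<forall>y xs. y \<in> nov \<longrightarrow> set xs \<subseteq> nov \<longrightarrow>
        (\<Sum>l\<le>length xs. ext_mod G n (ext_mod G n y (take l xs)) (drop l xs))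
        + (\<Sum>a\<le>length xs. \<Sum>b\<in>{a..length xs}.
           ext_mod G n y (take a xs @ [ext_alg G m (take (b - a) (drop a xs))] @ drop b xs)) = 0)"

text \<open>Cyclic element.  The map x |-> n_1(one; x) is Lambda_0-linear by construction,
  so being a Lambda_0-module isomorphism C -> D means being a bijection C -> D.\<close>
definition cyclic_elem :: "real set \<Rightarrow> (nat \<Rightarrow> real \<Rightarrow> 'd \<Rightarrow> 'c::zero list \<Rightarrow> 'd)
    \<Rightarrow> (real \<Rightarrow> 'd::comm_monoid_add) \<Rightarrow> bool" where
  "cyclic_elem G n one \<longleftrightarrow> one \<in> nov
     \<and> bij_betw (\<lambda>x::real \<Rightarrow> 'c. ext_mod G n one [x]) nov nov
     \<and> ext_mod G n one [] 0 = 0"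

definition T_sums :: "(nat \<Rightarrow> real \<Rightarrow> 'a::comm_monoid_add) \<Rightarrow> (real \<Rightarrow> 'a) \<Rightarrow> bool" where
  "T_sums f s \<longleftrightarrow> (\<forall>c. \<exists>K. \<forall>N\<ge>K. \<forall>\<nu>\<le>c. (\<Sum>k<N. f k \<nu>) = s \<nu>)"

definition bounding_cochain :: "real set \<Rightarrow> (nat \<Rightarrow> real \<Rightarrow> 'c list \<Rightarrow> 'c::ab_group_add)
    \<Rightarrow> (real \<Rightarrow> 'c) \<Rightarrow> bool" where
  "bounding_cochain G m b \<longleftrightarrow> b \<in> nov \<and> b 0 = 0 \<and> T_sums (\<lambda>k. ext_alg G m (replicate k b)) 0"

end

theory Submission
  imports Defs
begin



lemma sum_fun_apply: "(sum f A) x = (\<Sum>a\<in>A. f a x)"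
  by (induction A rule: infinite_finite_induct) auto

lemma sum_stab:
  fixes f :: "nat \<Rightarrow> 'a::comm_monoid_add"
  assumes "\<forall>k\<ge>K0. f k = 0" "K0 \<le> K" "K \<le> K'"
  shows "(\<Sum>k<K. f k) = (\<Sum>k<K'. f k)"
  using assms by (intro sum.mono_neutral_left) auto

lemma sum_stab2:
  fixes f :: "nat \<Rightarrow> 'a::comm_monoid_add"
  assumes "\<forall>k\<ge>K0. f k = 0" "K0 \<le> K" "K0 \<le> K'"
  shows "(\<Sum>k<K. f k) = (\<Sum>k<K'. f k)"
  using sum_stab[OF assms(1,2), of "max K K'"] sum_stab[OF assms(1,3), of "max K K'"] by simp

lemma box_sum:
  fixes f :: "nat \<Rightarrow> nat \<Rightarrow> 'a::comm_monoid_add"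
  assumes "\<And>i j. i > B \<or> j > B \<Longrightarrow> f i j = 0" "2 * B < K"
  shows "(\<Sum>k<K. \<Sum>i\<le>k. f i (k - i)) = (\<Sum>i\<le>B. \<Sum>j\<le>B. f i j)"
proof -
  have "(\<Sum>k<K. \<Sum>i\<le>k. f i (k - i)) = (\<Sum>(i,j)\<in>{(i,j). i+j < K}. f i j)"
    by (rule sum.triangle_reindex[symmetric])
  also have "\<dots> = (\<Sum>(i,j)\<in>{..B}\<times>{..B}. f i j)"
  proof (rule sum.mono_neutral_right)
    have "{(i,j). i+j < K} \<subseteq> {..<K} \<times> {..<K}" by auto
    then show "finite {(i,j). i+j < K}" by (rule finite_subset) auto
    show "{..B}\<times>{..B} \<subseteq> {(i,j). i+j < K}" using assms(2) by auto
    show "\<forall>x\<in>{(i,j). i+j < K} - {..B}\<times>{..B}. (case x of (i,j) \<Rightarrow> f i j) = 0"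
    proof
      fix x assume x: "x \<in> {(i,j). i+j < K} - {..B}\<times>{..B}"
      obtain i j where ij: "x = (i,j)" by (cases x)
      then have "i > B \<or> j > B" using x by auto
      then show "(case x of (i,j) \<Rightarrow> f i j) = 0" using ij assms(1) by simp
    qed
  qed
  also have "\<dots> = (\<Sum>i\<le>B. \<Sum>j\<le>B. f i j)"
    by (simp add: sum.cartesian_product)
  finally show ?thesis .
qed

lemma map_zip_replicate:
  "length ms = k \<Longrightarrow> map (\<lambda>(x, \<mu>). x \<mu>) (zip (replicate k f) ms) = map f ms"
  by (induction ms arbitrary: k) (auto simp: Suc_length_conv)

lemma map_zip_nth:
  "length ms = length xs \<Longrightarrow> i < length xs \<Longrightarrow> map (\<lambda>(x, \<mu>). x \<mu>) (zip xs ms) ! i = (xs ! i) (ms ! i)"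
  by simp

lemma map_zip_update:
  "length ms = length xs \<Longrightarrow> i < length xs \<Longrightarrow>
    map (\<lambda>(x, \<mu>). x \<mu>) (zip (xs[i := u]) ms) = (map (\<lambda>(x, \<mu>). x \<mu>) (zip xs ms))[i := u (ms ! i)]"
proof -
  assume a: "length ms = length xs" "i < length xs"
  have "zip (xs[i := u]) ms = zip (xs[i := u]) (ms[i := ms ! i])" by simp
  also have "\<dots> = (zip xs ms)[i := (u, ms ! i)]" by (rule zip_update)
  finally show ?thesis by (simp add: map_update)
qed

lemma multiadd_zero:
  fixes F :: "'a::monoid_add list \<Rightarrow> 'b::ab_group_add"
  assumes "multiadd F" "i < length xs" "xs ! i = 0"
  shows "F xs = 0"
proof -
  have "F (xs[i := 0 + 0]) = F (xs[i := 0]) + F (xs[i := 0])"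
    using assms(1,2) unfolding multiadd_def by blast
  then show ?thesis using assms(3) by (simp add: list_update_id[of xs i, simplified assms(3)])
qed

lemma modadd_zero:
  fixes F :: "'d::ab_group_add \<Rightarrow> 'c::monoid_add list \<Rightarrow> 'd"
  assumes "modadd F"
  shows "F 0 xs = 0"
proof -
  have "F (0 + 0) xs = F 0 xs + F 0 xs" using assms unfolding modadd_def by blast
  then show ?thesis by simp
qed




locale S =
  fixes G :: "real set"
    and m :: "nat \<Rightarrow> real \<Rightarrow> 'c::ab_group_add list \<Rightarrow> 'c"
    and n :: "nat \<Rightarrow> real \<Rightarrow> 'd::ab_group_add \<Rightarrow> 'c list \<Rightarrow> 'd"
    and one :: "real \<Rightarrow> 'd"
  assumes char2D: "\<forall>w::'d. w + w = 0"
    and G: "discrete_submonoid G"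
    and md: "ainf_mod G m n"
    and cyc: "cyclic_elem G n one"
    and onegap: "gapped G one"
begin

lemma G0: "0 \<in> G" using G by (simp add: discrete_submonoid_def)
lemma Gnn: "x \<in> G \<Longrightarrow> 0 \<le> x" using G by (auto simp: discrete_submonoid_def)
lemma Gadd: "x \<in> G \<Longrightarrow> y \<in> G \<Longrightarrow> x + y \<in> G" using G by (auto simp: discrete_submonoid_def)
lemma Gfin: "finite (G \<inter> {..c})" using G by (auto simp: discrete_submonoid_def)

lemma G_sum_list: "set ms \<subseteq> G \<Longrightarrow> sum_list ms \<in> G"
  by (induction ms) (auto simp: G0 Gadd)

lemma nadd: "modadd (n k l)" using md by (simp add: ainf_mod_def)
lemma n_zero_y: "n k l 0 zs = 0" by (rule modadd_zero[OF nadd])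
lemma n_zero_x: "i < length zs \<Longrightarrow> zs ! i = 0 \<Longrightarrow> n k l y zs = 0"
  using nadd[of k l] unfolding modadd_def by (blast intro: multiadd_zero)
lemma n_add_y: "n k l (y + y') zs = n k l y zs + n k l y' zs"
  using nadd[of k l] unfolding modadd_def by blast
lemma n_add_x: "i < length zs \<Longrightarrow> n k l y (zs[i := a + b]) = n k l y (zs[i := a]) + n k l y (zs[i := b])"
  using nadd[of k l] unfolding modadd_def multiadd_def by blast

lemma one_nov: "one \<in> nov" using cyc by (simp add: cyclic_elem_def)

lemma nov_nonneg: "f \<in> nov \<Longrightarrow> f \<mu> \<noteq> 0 \<Longrightarrow> 0 \<le> \<mu>"
  unfolding nov_def by (cases "\<mu> < 0") auto
lemma nov_fin: "f \<in> nov \<Longrightarrow> finite {\<mu>. \<mu> \<le> c \<and> f \<mu> \<noteq> 0}"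
  unfolding nov_def by blast

lemma gapped_nov: "gapped G f \<Longrightarrow> f \<in> nov"
  unfolding nov_def gapped_def
proof safe
  fix \<nu> :: real assume "\<forall>\<nu>. f \<nu> \<noteq> 0 \<longrightarrow> \<nu> \<in> G" "\<nu> < 0"
  then show "f \<nu> = 0" using Gnn by force
next
  fix c assume "\<forall>\<nu>. f \<nu> \<noteq> 0 \<longrightarrow> \<nu> \<in> G"
  then have "{\<nu>. \<nu> \<le> c \<and> f \<nu> \<noteq> 0} \<subseteq> G \<inter> {..c}" by auto
  then show "finite {\<nu>. \<nu> \<le> c \<and> f \<nu> \<noteq> 0}" using Gfin finite_subset by blast
qed

lemma gapped_add: "gapped G f \<Longrightarrow> gapped G g \<Longrightarrow> gapped G (f + g :: real \<Rightarrow> 'x::monoid_add)"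
  unfolding gapped_def
proof (intro allI impI)
  fix \<nu> assume "\<forall>\<nu>. f \<nu> \<noteq> 0 \<longrightarrow> \<nu> \<in> G" "\<forall>\<nu>. g \<nu> \<noteq> 0 \<longrightarrow> \<nu> \<in> G" "(f + g) \<nu> \<noteq> 0"
  then show "\<nu> \<in> G" by (cases "f \<nu> = 0") auto
qed
lemma gapped_zero: "gapped G 0" unfolding gapped_def by simp
lemma gapped_sum: "(\<And>a. a \<in> A \<Longrightarrow> gapped G (f a)) \<Longrightarrow> gapped G (sum f A :: real \<Rightarrow> 'x::comm_monoid_add)"
  by (induction A rule: infinite_finite_induct) (auto intro: gapped_add gapped_zero)

lemma nov_add: "f \<in> nov \<Longrightarrow> g \<in> nov \<Longrightarrow> (f + g :: real \<Rightarrow> 'x::monoid_add) \<in> nov"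
  unfolding nov_def
proof safe
  fix c assume "\<forall>c. finite {\<nu>. \<nu> \<le> c \<and> f \<nu> \<noteq> 0}" "\<forall>c. finite {\<nu>. \<nu> \<le> c \<and> g \<nu> \<noteq> 0}"
  then have "finite ({\<nu>. \<nu> \<le> c \<and> f \<nu> \<noteq> 0} \<union> {\<nu>. \<nu> \<le> c \<and> g \<nu> \<noteq> 0})" by blast
  then show "finite {\<nu>. \<nu> \<le> c \<and> (f + g) \<nu> \<noteq> 0}"
    by (rule finite_subset[rotated]) auto
qed auto
lemma nov_zero: "0 \<in> nov" unfolding nov_def by simp
lemma nov_sum: "(\<And>a. a \<in> A \<Longrightarrow> f a \<in> nov) \<Longrightarrow> (sum f A :: real \<Rightarrow> 'x::comm_monoid_add) \<in> nov"
  by (induction A rule: infinite_finite_induct) (auto intro: nov_add nov_zero)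

definition IM :: "(real \<Rightarrow> 'd) \<Rightarrow> (real \<Rightarrow> 'c) list \<Rightarrow> real \<Rightarrow> (real \<times> real \<times> real list) set" where
  "IM y xs \<nu> = {(l, \<mu>, ms). l \<in> G \<and> y \<mu> \<noteq> 0
        \<and> length ms = length xs
        \<and> (\<forall>i<length xs. (xs ! i) (ms ! i) \<noteq> 0) \<and> l + \<mu> + sum_list ms = \<nu>}"

lemma ext_mod_IM: "ext_mod G n y xs \<nu> = (\<Sum>(l, \<mu>, ms) \<in> IM y xs \<nu>.
      n (length xs) l (y \<mu>) (map (\<lambda>(x, \<mu>). x \<mu>) (zip xs ms)))"
  unfolding ext_mod_def IM_def by simp

definition IA :: "(real \<Rightarrow> 'c) list \<Rightarrow> real \<Rightarrow> (real \<times> real list) set" where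
  "IA xs \<nu> = {(l, ms). l \<in> G \<and> length ms = length xs
        \<and> (\<forall>i<length xs. (xs ! i) (ms ! i) \<noteq> 0) \<and> l + sum_list ms = \<nu>}"

lemma ext_alg_IA: "ext_alg G m xs \<nu> = (\<Sum>(l, ms) \<in> IA xs \<nu>.
      m (length xs) l (map (\<lambda>(x, \<mu>). x \<mu>) (zip xs ms)))"
  unfolding ext_alg_def IA_def by simp

lemma ext_mod_nz: "ext_mod G n y xs \<nu> \<noteq> 0 \<Longrightarrow> \<exists>p. p \<in> IM y xs \<nu>"
  unfolding ext_mod_IM by (cases "IM y xs \<nu> = {}") auto
lemma ext_alg_nz: "ext_alg G m xs \<nu> \<noteq> 0 \<Longrightarrow> \<exists>p. p \<in> IA xs \<nu>"
  unfolding ext_alg_IA by (cases "IA xs \<nu> = {}") auto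

lemma ms_nonneg: "set xs \<subseteq> nov \<Longrightarrow> length ms = length xs \<Longrightarrow> \<forall>i<length xs. (xs ! i) (ms ! i) \<noteq> 0
   \<Longrightarrow> x \<in> set ms \<Longrightarrow> 0 \<le> x"
proof -
  assume a: "set xs \<subseteq> nov" "length ms = length xs" "\<forall>i<length xs. (xs ! i) (ms ! i) \<noteq> 0" "x \<in> set ms"
  then obtain i where i: "i < length xs" "x = ms ! i" by (metis in_set_conv_nth)
  then have "xs ! i \<in> nov" using a(1) by auto
  then show "0 \<le> x" using nov_nonneg a(3) i by blast
qed

lemma ms_le: "set xs \<subseteq> nov \<Longrightarrow> length ms = length xs \<Longrightarrow> \<forall>i<length xs. (xs ! i) (ms ! i) \<noteq> 0
   \<Longrightarrow> x \<in> set ms \<Longrightarrow> x \<le> sum_list ms"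
  by (rule member_le_sum_list) (blast intro: ms_nonneg)+

lemma ms_sum_nonneg: "set xs \<subseteq> nov \<Longrightarrow> length ms = length xs \<Longrightarrow> \<forall>i<length xs. (xs ! i) (ms ! i) \<noteq> 0
   \<Longrightarrow> 0 \<le> sum_list ms"
  by (rule sum_list_nonneg) (blast intro: ms_nonneg)

lemma IM_props:
  assumes "y \<in> nov" "set xs \<subseteq> nov" "(l, \<mu>, ms) \<in> IM y xs \<nu>"
  shows "0 \<le> l" "0 \<le> \<mu>" "0 \<le> sum_list ms" "\<mu> \<le> \<nu>" "sum_list ms \<le> \<nu>" "l \<le> \<nu>"
    "\<And>x. x \<in> set ms \<Longrightarrow> 0 \<le> x \<and> x \<le> \<nu>"
proof -
  have a: "l \<in> G" "y \<mu> \<noteq> 0" "length ms = length xs" "\<forall>i<length xs. (xs ! i) (ms ! i) \<noteq> 0"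
    "l + \<mu> + sum_list ms = \<nu>" using assms(3) by (auto simp: IM_def)
  show 1: "0 \<le> l" using a Gnn by auto
  show 2: "0 \<le> \<mu>" using a assms(1) nov_nonneg by auto
  show 3: "0 \<le> sum_list ms" using a assms(2) ms_sum_nonneg by auto
  show "\<mu> \<le> \<nu>" "sum_list ms \<le> \<nu>" "l \<le> \<nu>" using 1 2 3 a by auto
  fix x assume "x \<in> set ms"
  then show "0 \<le> x \<and> x \<le> \<nu>" using ms_nonneg[OF assms(2) a(3,4)] ms_le[OF assms(2) a(3,4)] 1 2 a(5) by force
qed

lemma IA_props:
  assumes "set xs \<subseteq> nov" "(l, ms) \<in> IA xs \<nu>"
  shows "0 \<le> l" "0 \<le> sum_list ms" "sum_list ms \<le> \<nu>" "l \<le> \<nu>"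
    "\<And>x. x \<in> set ms \<Longrightarrow> 0 \<le> x \<and> x \<le> \<nu>"
proof -
  have a: "l \<in> G" "length ms = length xs" "\<forall>i<length xs. (xs ! i) (ms ! i) \<noteq> 0"
    "l + sum_list ms = \<nu>" using assms(2) by (auto simp: IA_def)
  show 1: "0 \<le> l" using a Gnn by auto
  show 3: "0 \<le> sum_list ms" using a assms(1) ms_sum_nonneg by auto
  show "sum_list ms \<le> \<nu>" "l \<le> \<nu>" using 1 3 a by auto
  fix x assume "x \<in> set ms"
  then show "0 \<le> x \<and> x \<le> \<nu>" using ms_nonneg[OF assms(1) a(2,3)] ms_le[OF assms(1) a(2,3)] 1 a(4) by force
qed

lemma ext_mod_gapped:
  assumes "gapped G y" "\<forall>x\<in>set xs. gapped G x"
  shows "gapped G (ext_mod G n y xs)"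
  unfolding gapped_def
proof (intro allI impI)
  fix \<nu> assume "ext_mod G n y xs \<nu> \<noteq> 0"
  then obtain p where "p \<in> IM y xs \<nu>" using ext_mod_nz by blast
  then obtain l \<mu> ms where p: "(l, \<mu>, ms) \<in> IM y xs \<nu>" by (cases p) auto
  then have a: "l \<in> G" "y \<mu> \<noteq> 0" "length ms = length xs" "\<forall>i<length xs. (xs ! i) (ms ! i) \<noteq> 0"
    "l + \<mu> + sum_list ms = \<nu>" by (auto simp: IM_def)
  have "\<mu> \<in> G" using a(2) assms(1) by (simp add: gapped_def)
  moreover have "set ms \<subseteq> G"
  proof
    fix x assume "x \<in> set ms"
    then obtain i where "i < length xs" "x = ms ! i" using a(3) by (metis in_set_conv_nth)
    then show "x \<in> G" using a(4) assms(2) unfolding gapped_def by (meson nth_mem)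
  qed
  ultimately show "\<nu> \<in> G" using a(1,5) Gadd G_sum_list by blast
qed

lemma ext_alg_gapped:
  assumes "\<forall>x\<in>set xs. gapped G x"
  shows "gapped G (ext_alg G m xs)"
  unfolding gapped_def
proof (intro allI impI)
  fix \<nu> assume "ext_alg G m xs \<nu> \<noteq> 0"
  then obtain p where "p \<in> IA xs \<nu>" using ext_alg_nz by blast
  then obtain l ms where p: "(l, ms) \<in> IA xs \<nu>" by (cases p) auto
  then have a: "l \<in> G" "length ms = length xs" "\<forall>i<length xs. (xs ! i) (ms ! i) \<noteq> 0"
    "l + sum_list ms = \<nu>" by (auto simp: IA_def)
  have "set ms \<subseteq> G"
  proof
    fix x assume "x \<in> set ms"
    then obtain i where "i < length xs" "x = ms ! i" using a(2) by (metis in_set_conv_nth)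
    then show "x \<in> G" using a(3) assms unfolding gapped_def by (meson nth_mem)
  qed
  then show "\<nu> \<in> G" using a(1,4) Gadd G_sum_list by blast
qed

end



context S begin

definition N :: "real \<Rightarrow> nat" where
  "N c = (if G \<inter> {0<..c} = {} then 0 else nat \<lceil>c / Min (G \<inter> {0<..c})\<rceil>)"

lemma N_bound:
  fixes f :: "'i \<Rightarrow> real"
  assumes fin: "finite I" and pos: "\<forall>i\<in>I. f i \<in> G \<and> 0 < f i" and sm: "sum f I \<le> c"
  shows "card I \<le> N c"
proof (cases "I = {}")
  case True then show ?thesis by simp
next
  case False
  then obtain i0 where i0: "i0 \<in> I" by blast
  have le: "\<And>i. i \<in> I \<Longrightarrow> f i \<le> c"
  proof -
    fix i assume "i \<in> I"
    then have "f i \<le> sum f I" using member_le_sum[of i I f] fin pos by fastforce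
    then show "f i \<le> c" using sm by simp
  qed
  let ?P = "G \<inter> {0<..c}"
  have Pfin: "finite ?P" using Gfin[of c] by (rule finite_subset[rotated]) auto
  have inP: "\<And>i. i \<in> I \<Longrightarrow> f i \<in> ?P" using pos le by auto
  then have Pne: "?P \<noteq> {}" using i0 by blast
  define \<delta> where "\<delta> = Min ?P"
  have dP: "\<delta> \<in> ?P" unfolding \<delta>_def using Pfin Pne by (rule Min_in)
  then have dpos: "0 < \<delta>" by auto
  have dle: "\<And>i. i \<in> I \<Longrightarrow> \<delta> \<le> f i" unfolding \<delta>_def using Pfin inP by (simp add: Min_le)
  have "real (card I) * \<delta> \<le> sum f I" using sum_bounded_below[of I \<delta> f] dle by simp
  then have "real (card I) * \<delta> \<le> c" using sm by simp
  then have "real (card I) \<le> c / \<delta>" using dpos by (simp add: field_simps)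
  also have "\<dots> \<le> of_int \<lceil>c / \<delta>\<rceil>" by simp
  finally have "int (card I) \<le> \<lceil>c / \<delta>\<rceil>" by linarith
  moreover have "N c = nat \<lceil>c / \<delta>\<rceil>" unfolding N_def \<delta>_def using Pne by simp
  ultimately show ?thesis by simp
qed

lemma IM_ms_le: "y \<in> nov \<Longrightarrow> set xs \<subseteq> nov \<Longrightarrow> (l, \<mu>, ms) \<in> IM y xs \<nu> \<Longrightarrow> i < length xs \<Longrightarrow> ms ! i \<le> \<nu> \<and> 0 \<le> ms ! i"
  using IM_props(7)[of y xs l \<mu> ms \<nu> "ms ! i"] by (auto simp: IM_def)

lemma IA_ms_le: "set xs \<subseteq> nov \<Longrightarrow> (l, ms) \<in> IA xs \<nu> \<Longrightarrow> i < length xs \<Longrightarrow> ms ! i \<le> \<nu> \<and> 0 \<le> ms ! i"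
  using IA_props(5)[of xs l ms \<nu> "ms ! i"] by (auto simp: IA_def)

lemma sub_sum_le:
  assumes "I \<subseteq> {..<length ms}" "\<forall>x\<in>set ms. 0 \<le> (x::real)"
  shows "sum (nth ms) I \<le> sum_list ms"
proof -
  have "sum (nth ms) I \<le> sum (nth ms) {..<length ms}"
    using assms by (intro sum_mono2) auto
  also have "\<dots> = sum_list ms" by (simp add: sum_list_sum_nth atLeast0LessThan)
  finally show ?thesis .
qed

lemma ext_mod_vanish:
  assumes y: "y \<in> nov" and xs: "set xs \<subseteq> nov" and I: "I \<subseteq> {..<length xs}" and Ib: "\<forall>i\<in>I. xs ! i = b"
    and bg: "gapped G b" and b0: "b 0 = 0" and card: "N c < card I" and nc: "\<nu> \<le> c"
  shows "ext_mod G n y xs \<nu> = 0"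
proof (rule ccontr)
  assume "ext_mod G n y xs \<nu> \<noteq> 0"
  then obtain p where "p \<in> IM y xs \<nu>" using ext_mod_nz by blast
  then obtain l \<mu> ms where p: "(l, \<mu>, ms) \<in> IM y xs \<nu>" by (cases p) auto
  then have a: "l \<in> G" "y \<mu> \<noteq> 0" "length ms = length xs" "\<forall>i<length xs. (xs ! i) (ms ! i) \<noteq> 0"
    "l + \<mu> + sum_list ms = \<nu>" by (auto simp: IM_def)
  have pos: "\<forall>i\<in>I. ms ! i \<in> G \<and> 0 < ms ! i"
  proof
    fix i assume i: "i \<in> I"
    then have "b (ms ! i) \<noteq> 0" using a(4) I Ib by auto
    then show "ms ! i \<in> G \<and> 0 < ms ! i"
      using bg b0 gapped_nov[OF bg] nov_nonneg unfolding gapped_def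
      by (metis order_le_less)
  qed
  have "sum (nth ms) I \<le> sum_list ms"
    using I a(3) IM_props(7)[OF y xs p] by (intro sub_sum_le) auto
  also have "\<dots> \<le> c" using IM_props[OF y xs p] nc by linarith
  finally have "card I \<le> N c" using pos I by (intro N_bound) (auto intro: finite_subset)
  then show False using card by simp
qed

lemma ext_alg_vanish:
  assumes xs: "set xs \<subseteq> nov" and I: "I \<subseteq> {..<length xs}" and Ib: "\<forall>i\<in>I. xs ! i = b"
    and bg: "gapped G b" and b0: "b 0 = 0" and card: "N c < card I" and nc: "\<nu> \<le> c"
  shows "ext_alg G m xs \<nu> = 0"
proof (rule ccontr)
  assume "ext_alg G m xs \<nu> \<noteq> 0"
  then obtain p where "p \<in> IA xs \<nu>" using ext_alg_nz by blast
  then obtain l ms where p: "(l, ms) \<in> IA xs \<nu>" by (cases p) auto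
  then have a: "l \<in> G" "length ms = length xs" "\<forall>i<length xs. (xs ! i) (ms ! i) \<noteq> 0"
    "l + sum_list ms = \<nu>" by (auto simp: IA_def)
  have pos: "\<forall>i\<in>I. ms ! i \<in> G \<and> 0 < ms ! i"
  proof
    fix i assume i: "i \<in> I"
    then have "b (ms ! i) \<noteq> 0" using a(3) I Ib by auto
    then show "ms ! i \<in> G \<and> 0 < ms ! i"
      using bg b0 gapped_nov[OF bg] nov_nonneg unfolding gapped_def
      by (metis order_le_less)
  qed
  have "sum (nth ms) I \<le> sum_list ms"
    using I a(2) IA_props(5)[OF xs p] by (intro sub_sum_le) auto
  also have "\<dots> \<le> c" using IA_props[OF xs p] nc by linarith
  finally have "card I \<le> N c" using pos I by (intro N_bound) (auto intro: finite_subset)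
  then show False using card by simp
qed

lemma ext_mod_local:
  assumes y: "y \<in> nov" "y' \<in> nov" and xs: "set xs \<subseteq> nov" "set xs' \<subseteq> nov"
    and len: "length xs' = length xs"
    and ey: "\<forall>\<mu>\<le>\<nu>. y \<mu> = y' \<mu>" and ex: "\<forall>i<length xs. \<forall>\<mu>\<le>\<nu>. (xs ! i) \<mu> = (xs' ! i) \<mu>"
  shows "ext_mod G n y xs \<nu> = ext_mod G n y' xs' \<nu>"
proof -
  have sub: "IM y1 xs1 \<nu> \<subseteq> IM y2 xs2 \<nu>"
    if h: "y1 \<in> nov" "set xs1 \<subseteq> nov" "length xs2 = length xs1"
       "\<forall>\<mu>\<le>\<nu>. y1 \<mu> = y2 \<mu>" "\<forall>i<length xs1. \<forall>\<mu>\<le>\<nu>. (xs1 ! i) \<mu> = (xs2 ! i) \<mu>"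
    for y1 y2 xs1 xs2
  proof
    fix p assume pin: "p \<in> IM y1 xs1 \<nu>"
    obtain l \<mu> ms where pe: "p = (l, \<mu>, ms)" by (cases p) auto
    with pin have p: "(l, \<mu>, ms) \<in> IM y1 xs1 \<nu>" by simp
    have mu: "\<mu> \<le> \<nu>" using IM_props(4)[OF h(1,2) p] .
    have "\<forall>i<length xs1. ms ! i \<le> \<nu>" using IM_ms_le[OF h(1,2) p] by blast
    then show "p \<in> IM y2 xs2 \<nu>" using p h(3-5) mu unfolding pe IM_def by auto
  qed
  have eq: "IM y xs \<nu> = IM y' xs' \<nu>"
    using sub[of y xs xs' y'] sub[of y' xs' xs y] y xs len ey ex by (metis subset_antisym)
  show ?thesis unfolding ext_mod_IM eq[symmetric] len
  proof (rule sum.cong[OF refl])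
    fix p assume pin: "p \<in> IM y xs \<nu>"
    obtain l \<mu> ms where pe: "p = (l, \<mu>, ms)" by (cases p) auto
    with pin have p: "(l, \<mu>, ms) \<in> IM y xs \<nu>" by simp
    have lm: "length ms = length xs" using p by (simp add: IM_def)
    have mu: "\<mu> \<le> \<nu>" using IM_props(4)[OF y(1) xs(1) p] .
    have le: "\<forall>i<length xs. ms ! i \<le> \<nu>" using IM_ms_le[OF y(1) xs(1) p] by blast
    have "map (\<lambda>(x, \<mu>). x \<mu>) (zip xs ms) = map (\<lambda>(x, \<mu>). x \<mu>) (zip xs' ms)"
      by (rule nth_equalityI) (use lm len le ex in auto)
    then show "(case p of (l, \<mu>, ms) \<Rightarrow> n (length xs) l (y \<mu>) (map (\<lambda>(x, \<mu>). x \<mu>) (zip xs ms))) =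
          (case p of (l, \<mu>, ms) \<Rightarrow> n (length xs) l (y' \<mu>) (map (\<lambda>(x, \<mu>). x \<mu>) (zip xs' ms)))"
      using pe mu ey by simp
  qed
qed

lemma ext_alg_local:
  assumes xs: "set xs \<subseteq> nov" "set xs' \<subseteq> nov"
    and len: "length xs' = length xs"
    and ex: "\<forall>i<length xs. \<forall>\<mu>\<le>\<nu>. (xs ! i) \<mu> = (xs' ! i) \<mu>"
  shows "ext_alg G m xs \<nu> = ext_alg G m xs' \<nu>"
proof -
  have sub: "IA xs1 \<nu> \<subseteq> IA xs2 \<nu>"
    if h: "set xs1 \<subseteq> nov" "length xs2 = length xs1"
       "\<forall>i<length xs1. \<forall>\<mu>\<le>\<nu>. (xs1 ! i) \<mu> = (xs2 ! i) \<mu>"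
    for xs1 xs2
  proof
    fix p assume pin: "p \<in> IA xs1 \<nu>"
    obtain l ms where pe: "p = (l, ms)" by (cases p) auto
    with pin have p: "(l, ms) \<in> IA xs1 \<nu>" by simp
    have "\<forall>i<length xs1. ms ! i \<le> \<nu>" using IA_ms_le[OF h(1) p] by blast
    then show "p \<in> IA xs2 \<nu>" using p h(2-3) unfolding pe IA_def by auto
  qed
  have eq: "IA xs \<nu> = IA xs' \<nu>"
    using sub[of xs xs'] sub[of xs' xs] xs len ex by (metis subset_antisym)
  show ?thesis unfolding ext_alg_IA eq[symmetric] len
  proof (rule sum.cong[OF refl])
    fix p assume pin: "p \<in> IA xs \<nu>"
    obtain l ms where pe: "p = (l, ms)" by (cases p) auto
    with pin have p: "(l, ms) \<in> IA xs \<nu>" by simp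
    have lm: "length ms = length xs" using p by (simp add: IA_def)
    have le: "\<forall>i<length xs. ms ! i \<le> \<nu>" using IA_ms_le[OF xs(1) p] by blast
    have "map (\<lambda>(x, \<mu>). x \<mu>) (zip xs ms) = map (\<lambda>(x, \<mu>). x \<mu>) (zip xs' ms)"
      by (rule nth_equalityI) (use lm len le ex in auto)
    then show "(case p of (l, ms) \<Rightarrow> m (length xs) l (map (\<lambda>(x, \<mu>). x \<mu>) (zip xs ms))) =
          (case p of (l, ms) \<Rightarrow> m (length xs) l (map (\<lambda>(x, \<mu>). x \<mu>) (zip xs' ms)))"
      using pe by simp
  qed
qed

end



context S begin

definition JM :: "real set \<Rightarrow> nat \<Rightarrow> real \<Rightarrow> (real \<times> real \<times> real list) set" where
  "JM Sx k \<nu> = {(l, \<mu>, ms). l \<in> G \<and> \<mu> \<in> Sx \<and> length ms = k \<and> set ms \<subseteq> Sx \<and> l + \<mu> + sum_list ms = \<nu>}"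

lemma JM_finite: "finite Sx \<Longrightarrow> finite (JM Sx k \<nu>)"
proof -
  assume f: "finite Sx"
  have "JM Sx k \<nu> \<subseteq> (\<lambda>(\<mu>, ms). (\<nu> - \<mu> - sum_list ms, \<mu>, ms)) ` (Sx \<times> {ms. set ms \<subseteq> Sx \<and> length ms = k})"
  proof
    fix p assume "p \<in> JM Sx k \<nu>"
    then obtain l \<mu> ms where "p = (l, \<mu>, ms)" "l \<in> G" "\<mu> \<in> Sx" "length ms = k" "set ms \<subseteq> Sx" "l + \<mu> + sum_list ms = \<nu>"
      unfolding JM_def by auto
    then show "p \<in> (\<lambda>(\<mu>, ms). (\<nu> - \<mu> - sum_list ms, \<mu>, ms)) ` (Sx \<times> {ms. set ms \<subseteq> Sx \<and> length ms = k})"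
      by (intro image_eqI[where x="(\<mu>, ms)"]) auto
  qed
  moreover have "finite (Sx \<times> {ms. set ms \<subseteq> Sx \<and> length ms = k})"
    using f finite_lists_length_eq[OF f] by blast
  then have "finite ((\<lambda>(\<mu>, ms). (\<nu> - \<mu> - sum_list ms, \<mu>, ms)) ` (Sx \<times> {ms. set ms \<subseteq> Sx \<and> length ms = k}))"
    by (rule finite_imageI)
  ultimately show ?thesis by (rule finite_subset)
qed

definition supp_le :: "real \<Rightarrow> (real \<Rightarrow> 'x::zero) \<Rightarrow> real set" where
  "supp_le \<nu> f = {\<mu>. \<mu> \<le> \<nu> \<and> f \<mu> \<noteq> 0}"

lemma supp_le_fin: "f \<in> nov \<Longrightarrow> finite (supp_le \<nu> f)"
  unfolding supp_le_def by (rule nov_fin)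

lemma ext_mod_rep:
  assumes y: "y \<in> nov" and xs: "set xs \<subseteq> nov" and Sf: "finite Sx"
    and Sy: "supp_le \<nu> y \<subseteq> Sx" and Sxs: "\<forall>x\<in>set xs. supp_le \<nu> x \<subseteq> Sx"
  shows "ext_mod G n y xs \<nu> = (\<Sum>(l, \<mu>, ms) \<in> JM Sx (length xs) \<nu>.
      n (length xs) l (y \<mu>) (map (\<lambda>(x, \<mu>). x \<mu>) (zip xs ms)))"
  unfolding ext_mod_IM
proof (rule sum.mono_neutral_left)
  show "finite (JM Sx (length xs) \<nu>)" using Sf by (rule JM_finite)
  show "IM y xs \<nu> \<subseteq> JM Sx (length xs) \<nu>"
  proof
    fix p assume pin: "p \<in> IM y xs \<nu>"
    obtain l \<mu> ms where pe: "p = (l, \<mu>, ms)" by (cases p) auto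
    with pin have p: "(l, \<mu>, ms) \<in> IM y xs \<nu>" by simp
    have a: "l \<in> G" "y \<mu> \<noteq> 0" "length ms = length xs" "\<forall>i<length xs. (xs ! i) (ms ! i) \<noteq> 0"
      "l + \<mu> + sum_list ms = \<nu>" using p by (auto simp: IM_def)
    have "\<mu> \<in> Sx" using Sy a(2) IM_props(4)[OF y xs p] unfolding supp_le_def by auto
    moreover have "set ms \<subseteq> Sx"
    proof
      fix x assume "x \<in> set ms"
      then obtain i where i: "i < length xs" "x = ms ! i" using a(3) by (metis in_set_conv_nth)
      then have "x \<in> supp_le \<nu> (xs ! i)" using a(4) IM_ms_le[OF y xs p i(1)] unfolding supp_le_def by auto
      then show "x \<in> Sx" using Sxs i(1) by auto
    qed
    ultimately show "p \<in> JM Sx (length xs) \<nu>" using a pe unfolding JM_def by auto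
  qed
  show "\<forall>p\<in>JM Sx (length xs) \<nu> - IM y xs \<nu>. (case p of (l, \<mu>, ms) \<Rightarrow>
      n (length xs) l (y \<mu>) (map (\<lambda>(x, \<mu>). x \<mu>) (zip xs ms))) = 0"
  proof
    fix p assume pin: "p \<in> JM Sx (length xs) \<nu> - IM y xs \<nu>"
    obtain l \<mu> ms where pe: "p = (l, \<mu>, ms)" by (cases p) auto
    have a: "l \<in> G" "length ms = length xs" "l + \<mu> + sum_list ms = \<nu>"
      using pin pe by (auto simp: JM_def)
    have "y \<mu> = 0 \<or> (\<exists>i<length xs. (xs ! i) (ms ! i) = 0)"
      using pin pe a unfolding IM_def by auto
    then show "(case p of (l, \<mu>, ms) \<Rightarrow> n (length xs) l (y \<mu>) (map (\<lambda>(x, \<mu>). x \<mu>) (zip xs ms))) = 0"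
    proof
      assume "y \<mu> = 0" then show ?thesis using pe by (simp add: n_zero_y)
    next
      assume "\<exists>i<length xs. (xs ! i) (ms ! i) = 0"
      then obtain i where "i < length xs" "(xs ! i) (ms ! i) = 0" by blast
      then show ?thesis using pe a(2) by (auto intro!: n_zero_x[of i])
    qed
  qed
qed

lemma ext_mod_zero_y: "ext_mod G n 0 xs \<nu> = 0"
proof -
  have "IM 0 xs \<nu> = {}" unfolding IM_def by simp
  then show ?thesis unfolding ext_mod_IM by simp
qed

lemma ext_mod_zero_y': "ext_mod G n (\<lambda>_. 0) xs \<nu> = 0"
  using ext_mod_zero_y by (simp add: zero_fun_def)

lemma ext_mod_zero_x: "i < length xs \<Longrightarrow> xs ! i = 0 \<Longrightarrow> ext_mod G n y xs \<nu> = 0"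
proof -
  assume "i < length xs" "xs ! i = 0"
  then have "IM y xs \<nu> = {}" unfolding IM_def by force
  then show ?thesis unfolding ext_mod_IM by simp
qed

lemma set_update_nov: "set xs \<subseteq> nov \<Longrightarrow> u \<in> nov \<Longrightarrow> set (xs[i := u]) \<subseteq> nov"
  using set_update_subset_insert[of xs i u] by blast

lemma ext_mod_add_y:
  assumes y: "y \<in> nov" "y' \<in> nov" and xs: "set xs \<subseteq> nov"
  shows "ext_mod G n (y + y') xs \<nu> = ext_mod G n y xs \<nu> + ext_mod G n y' xs \<nu>"
proof -
  define Sx where "Sx = supp_le \<nu> y \<union> supp_le \<nu> y' \<union> (\<Union>x\<in>set xs. supp_le \<nu> x)"
  have fin: "finite Sx" unfolding Sx_def using y xs by (intro finite_UnI finite_UN_I supp_le_fin) auto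
  have yy: "y + y' \<in> nov" using y by (rule nov_add)
  have s1: "supp_le \<nu> (y + y') \<subseteq> Sx" unfolding Sx_def supp_le_def by auto
  have s2: "supp_le \<nu> y \<subseteq> Sx" "supp_le \<nu> y' \<subseteq> Sx" unfolding Sx_def by auto
  have sx: "\<forall>x\<in>set xs. supp_le \<nu> x \<subseteq> Sx" unfolding Sx_def by auto
  show ?thesis
    unfolding ext_mod_rep[OF yy xs fin s1 sx] ext_mod_rep[OF y(1) xs fin s2(1) sx] ext_mod_rep[OF y(2) xs fin s2(2) sx]
    unfolding sum.distrib[symmetric]
    by (rule sum.cong[OF refl]) (auto simp: n_add_y)
qed

lemma ext_mod_sum_y:
  assumes E: "\<forall>a\<in>L. E a \<in> nov" and xs: "set xs \<subseteq> nov"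
  shows "ext_mod G n (\<Sum>a\<in>L. E a) xs \<nu> = (\<Sum>a\<in>L. ext_mod G n (E a) xs \<nu>)"
  using E
proof (induction L rule: infinite_finite_induct)
  case (infinite A) then show ?case by (simp add: ext_mod_zero_y ext_mod_zero_y')
next
  case empty then show ?case by (simp add: ext_mod_zero_y ext_mod_zero_y')
next
  case (insert a A)
  have "ext_mod G n (E a + sum E A) xs \<nu> = ext_mod G n (E a) xs \<nu> + ext_mod G n (sum E A) xs \<nu>"
    using insert.prems by (intro ext_mod_add_y xs nov_sum) auto
  moreover have "ext_mod G n (sum E A) xs \<nu> = (\<Sum>a\<in>A. ext_mod G n (E a) xs \<nu>)"
    using insert.IH insert.prems by auto
  ultimately show ?case unfolding sum.insert[OF insert.hyps] by (simp only:)
qed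

lemma ext_mod_add_x:
  assumes y: "y \<in> nov" and xs: "set xs \<subseteq> nov" and i: "i < length xs" and uw: "u \<in> nov" "w \<in> nov"
  shows "ext_mod G n y (xs[i := u + w]) \<nu> = ext_mod G n y (xs[i := u]) \<nu> + ext_mod G n y (xs[i := w]) \<nu>"
proof -
  define Sx where "Sx = supp_le \<nu> y \<union> supp_le \<nu> u \<union> supp_le \<nu> w \<union> (\<Union>x\<in>set xs. supp_le \<nu> x)"
  have fin: "finite Sx" unfolding Sx_def using y xs uw by (intro finite_UnI finite_UN_I supp_le_fin) auto
  have uw2: "u + w \<in> nov" using uw by (rule nov_add)
  have sy: "supp_le \<nu> y \<subseteq> Sx" unfolding Sx_def by auto
  have su: "supp_le \<nu> u \<subseteq> Sx" "supp_le \<nu> w \<subseteq> Sx" unfolding Sx_def by auto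
  have suw: "supp_le \<nu> (u + w) \<subseteq> Sx" unfolding Sx_def supp_le_def by auto
  have sxs: "\<forall>x\<in>set xs. supp_le \<nu> x \<subseteq> Sx" unfolding Sx_def by auto
  have sv: "supp_le \<nu> v \<subseteq> Sx" if "v = u \<or> v = w \<or> v = u + w" for v
    using that
  proof (elim disjE)
    assume "v = u" then show ?thesis using su(1) by simp
  next
    assume "v = w" then show ?thesis using su(2) by simp
  next
    assume "v = u + w" then show ?thesis using suw by simp
  qed
  have sx: "\<forall>x\<in>set (xs[i := v]). supp_le \<nu> x \<subseteq> Sx" if "v = u \<or> v = w \<or> v = u + w" for v
  proof
    fix x assume "x \<in> set (xs[i := v])"
    then have "x \<in> insert v (set xs)" by (rule subsetD[OF set_update_subset_insert])
    then show "supp_le \<nu> x \<subseteq> Sx"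
    proof
      assume "x = v" then show ?thesis using sv[OF that] by simp
    next
      assume "x \<in> set xs" then show ?thesis using sxs by simp
    qed
  qed
  have r: "ext_mod G n y (xs[i := v]) \<nu> = (\<Sum>(l, \<mu>, ms) \<in> JM Sx (length xs) \<nu>.
      n (length xs) l (y \<mu>) (map (\<lambda>(x, \<mu>). x \<mu>) (zip (xs[i := v]) ms)))"
    if "v = u \<or> v = w \<or> v = u + w" for v
  proof -
    have "v \<in> nov" using that uw uw2 by auto
    then show ?thesis using ext_mod_rep[OF y set_update_nov[OF xs] fin sy sx[OF that]] by simp
  qed
  have "\<And>l \<mu> ms. (l, \<mu>, ms) \<in> JM Sx (length xs) \<nu> \<Longrightarrow>
     n (length xs) l (y \<mu>) (map (\<lambda>(x, \<mu>). x \<mu>) (zip (xs[i := u + w]) ms)) =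
     n (length xs) l (y \<mu>) (map (\<lambda>(x, \<mu>). x \<mu>) (zip (xs[i := u]) ms)) +
     n (length xs) l (y \<mu>) (map (\<lambda>(x, \<mu>). x \<mu>) (zip (xs[i := w]) ms))"
  proof -
    fix l \<mu> ms assume "(l, \<mu>, ms) \<in> JM Sx (length xs) \<nu>"
    then have lm: "length ms = length xs" by (simp add: JM_def)
    show "?thesis l \<mu> ms"
      unfolding map_zip_update[OF lm i]
      using n_add_x[of i "map (\<lambda>(x, \<mu>). x \<mu>) (zip xs ms)"] i lm by simp
  qed
  then show ?thesis unfolding r[OF disjI1[OF refl]] r[OF disjI2[OF disjI1[OF refl]]] r[OF disjI2[OF disjI2[OF refl]]]
    unfolding sum.distrib[symmetric]
    by (intro sum.cong[OF refl]) auto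
qed

lemma ext_mod_sum_x:
  assumes y: "y \<in> nov" and xs: "set xs \<subseteq> nov" and i: "i < length xs" and E: "\<forall>a\<in>L. E a \<in> nov"
  shows "ext_mod G n y (xs[i := (\<Sum>a\<in>L. E a)]) \<nu> = (\<Sum>a\<in>L. ext_mod G n y (xs[i := E a]) \<nu>)"
  using E
proof (induction L rule: infinite_finite_induct)
  case (infinite A) then show ?case using i by (auto intro: ext_mod_zero_x[of i] simp: zero_fun_def)
next
  case empty then show ?case using i by (auto intro: ext_mod_zero_x[of i] simp: zero_fun_def)
next
  case (insert a A)
  have "ext_mod G n y (xs[i := E a + sum E A]) \<nu> = ext_mod G n y (xs[i := E a]) \<nu> + ext_mod G n y (xs[i := sum E A]) \<nu>"
    using insert.prems by (intro ext_mod_add_x y xs i nov_sum) auto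
  moreover have "ext_mod G n y (xs[i := sum E A]) \<nu> = (\<Sum>a\<in>A. ext_mod G n y (xs[i := E a]) \<nu>)"
    using insert.IH insert.prems by auto
  ultimately show ?case unfolding sum.insert[OF insert.hyps] by (simp only:)
qed

end



context S begin

definition phi0 :: "'c \<Rightarrow> 'd" where "phi0 c = n 1 0 (one 0) [c]"

lemma phi0_add: "phi0 (a + b) = phi0 a + phi0 b"
  unfolding phi0_def using n_add_x[of 0 "[a]" 1 0 "one 0" a b] by simp

lemma phi0_zero: "phi0 0 = 0"
  unfolding phi0_def by (rule n_zero_x[of 0]) auto

lemma phi0_diff: "phi0 (a - b) = phi0 a - phi0 b"
  using phi0_add[of "a - b" b] by (simp add: algebra_simps)

lemma gapped_supp: "gapped G f \<Longrightarrow> supp_le \<nu> f \<subseteq> G \<inter> {..\<nu>}"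
  unfolding gapped_def supp_le_def by auto

lemma JM_props:
  assumes "(l, \<mu>, ms) \<in> JM (G \<inter> {..\<nu>}) k \<nu>"
  shows "l \<in> G" "0 \<le> l" "\<mu> \<in> G" "0 \<le> \<mu>" "length ms = k" "set ms \<subseteq> G" "l + \<mu> + sum_list ms = \<nu>"
    "\<forall>x\<in>set ms. 0 \<le> x"
  using assms Gnn unfolding JM_def by auto

lemma JM_two:
  assumes p: "(l, \<mu>, ms) \<in> JM (G \<inter> {..\<nu>}) k \<nu>" and i: "i < k" "i' < k" "i \<noteq> i'" and mi: "ms ! i = \<nu>"
  shows "ms ! i' = 0"
proof -
  note a = JM_props[OF p]
  have "sum (nth ms) {i, i'} \<le> sum_list ms"
    using a(5,8) i by (intro sub_sum_le) auto
  then have "ms ! i + ms ! i' \<le> sum_list ms" using i(3) by simp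
  moreover have "0 \<le> ms ! i'" using a(5,8) i(2) by auto
  ultimately show ?thesis using a(2,4,7) mi by linarith
qed

lemma JM_single:
  assumes p: "(l, \<mu>, ms) \<in> JM (G \<inter> {..\<nu>}) 1 \<nu>" and mi: "ms ! 0 = \<nu>"
  shows "l = 0" "\<mu> = 0" "ms = [\<nu>]"
proof -
  note a = JM_props[OF p]
  obtain x where ms: "ms = [x]" using a(5) by (metis One_nat_def length_0_conv length_Suc_conv)
  then show "ms = [\<nu>]" using mi by simp
  then show "l = 0" "\<mu> = 0" using a(2,4,7) by auto
qed

lemma coeff0:
  assumes x: "x \<in> nov"
  shows "ext_mod G n one [x] 0 = phi0 (x 0)"
proof -
  have s1: "supp_le 0 one \<subseteq> {0}" using one_nov nov_nonneg unfolding supp_le_def by force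
  have s2: "\<forall>z\<in>set [x]. supp_le 0 z \<subseteq> {0}" using x nov_nonneg unfolding supp_le_def by force
  have J: "JM {0} (length [x]) 0 = {(0, 0, [0])}"
  proof
    show "{(0, 0, [0])} \<subseteq> JM {0} (length [x]) 0" using G0 unfolding JM_def by auto
    show "JM {0} (length [x]) 0 \<subseteq> {(0, 0, [0])}"
    proof
      fix p assume "p \<in> JM {0} (length [x]) 0"
      then obtain l \<mu> ms where pe: "p = (l, \<mu>, ms)" "\<mu> = 0" "length ms = 1" "set ms \<subseteq> {0}" "l + \<mu> + sum_list ms = 0"
        unfolding JM_def by auto
      obtain z where "ms = [z]" using pe(3) by (metis One_nat_def length_0_conv length_Suc_conv)
      then show "p \<in> {(0, 0, [0])}" using pe by auto
    qed
  qed
  have xs: "set [x] \<subseteq> nov" using x by simp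
  have f0: "finite {0::real}" by simp
  show ?thesis unfolding ext_mod_rep[OF one_nov xs f0 s1 s2] J by (simp add: phi0_def)
qed

lemma KL:
  assumes bg: "gapped G b" and b0: "b 0 = 0" and tg: "gapped G t" and t0: "t 0 = 0"
    and nuG: "\<nu> \<in> G" and bt: "\<forall>\<mu><\<nu>. t \<mu> = b \<mu>" and tnu: "t \<nu> = 0"
  shows "ext_mod G n one (replicate k b) \<nu> = ext_mod G n one (replicate k t) \<nu> + (if k = 1 then phi0 (b \<nu>) else 0)"
proof -
  define Sx where "Sx = G \<inter> {..\<nu>}"
  have fin: "finite Sx" unfolding Sx_def by (rule Gfin)
  have s1: "supp_le \<nu> one \<subseteq> Sx" unfolding Sx_def by (rule gapped_supp[OF onegap])
  have sb: "\<forall>z\<in>set (replicate k b). supp_le \<nu> z \<subseteq> Sx" unfolding Sx_def using gapped_supp[OF bg] by auto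
  have st: "\<forall>z\<in>set (replicate k t). supp_le \<nu> z \<subseteq> Sx" unfolding Sx_def using gapped_supp[OF tg] by auto
  have bn: "set (replicate k b) \<subseteq> nov" using gapped_nov[OF bg] by auto
  have tn: "set (replicate k t) \<subseteq> nov" using gapped_nov[OF tg] by auto
  define P0 where "P0 = ((0::real), (0::real), [\<nu>])"
  have P0in: "k = 1 \<Longrightarrow> P0 \<in> JM Sx k \<nu>" unfolding P0_def Sx_def JM_def using G0 nuG Gnn by auto
  have pw: "n k l (one \<mu>) (map b ms) = n k l (one \<mu>) (map t ms) + (if (l, \<mu>, ms) = P0 then (if k = 1 then phi0 (b \<nu>) else 0) else 0)"
    if p: "(l, \<mu>, ms) \<in> JM Sx k \<nu>" for l \<mu> ms
  proof -
    note a = JM_props[OF p[unfolded Sx_def]]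
    have msle: "\<forall>x\<in>set ms. x \<le> \<nu>" using p unfolding JM_def Sx_def by auto
    show ?thesis
    proof (cases "\<forall>x\<in>set ms. x < \<nu>")
      case True
      then have mq: "map b ms = map t ms" using bt by auto
      have "(l, \<mu>, ms) \<noteq> P0" using True unfolding P0_def by auto
      then show ?thesis unfolding mq by simp
    next
      case False
      then obtain x where x0: "x \<in> set ms" "\<not> x < \<nu>" by blast
      have "x \<le> \<nu>" using msle x0(1) by blast
      then have x: "x \<in> set ms" "x = \<nu>" using x0 by auto
      then obtain i where i: "i < k" "ms ! i = \<nu>" using a(5) by (auto simp: in_set_conv_nth)
      show ?thesis
      proof (cases "k = 1")
        case True
        note s = JM_single[OF p[unfolded Sx_def True]]
        have i0: "ms ! 0 = \<nu>" using i True by simp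
        have "(l, \<mu>, ms) = P0" using s[OF i0] unfolding P0_def by simp
        moreover have "n k l (one \<mu>) (map t ms) = 0" using s[OF i0] True tnu by (auto intro: n_zero_x[of 0])
        ultimately show ?thesis using s[OF i0] True by (simp add: phi0_def)
      next
        case False
        define i' where "i' = (if i = 0 then 1 else (0::nat))"
        have i': "i' < k" "i' \<noteq> i" using i(1) False unfolding i'_def by auto
        have z: "ms ! i' = 0" using JM_two[OF p[unfolded Sx_def] i(1) i'(1) i'(2)[symmetric] i(2)] .
        have lb: "length (map b ms) = k" "length (map t ms) = k" using a(5) by auto
        have "map b ms ! i' = 0" "map t ms ! i' = 0" using z b0 t0 i'(1) a(5) by auto
        then have "n k l (one \<mu>) (map b ms) = 0" "n k l (one \<mu>) (map t ms) = 0"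
          using n_zero_x[of i' "map b ms"] n_zero_x[of i' "map t ms"] lb i'(1) by auto
        then show ?thesis using False by simp
      qed
    qed
  qed
  have "ext_mod G n one (replicate k b) \<nu> = (\<Sum>(l, \<mu>, ms)\<in>JM Sx k \<nu>. n k l (one \<mu>) (map b ms))"
    unfolding ext_mod_rep[OF one_nov bn fin s1 sb] length_replicate
    by (intro sum.cong[OF refl]) (auto simp: JM_def map_zip_replicate)
  also have "\<dots> = (\<Sum>(l, \<mu>, ms)\<in>JM Sx k \<nu>. n k l (one \<mu>) (map t ms) + (if (l, \<mu>, ms) = P0 then (if k = 1 then phi0 (b \<nu>) else 0) else 0))"
  proof (rule sum.cong[OF refl])
    fix p assume pin: "p \<in> JM Sx k \<nu>"
    obtain l \<mu> ms where pe: "p = (l, \<mu>, ms)" by (cases p) auto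
    show "(case p of (l, \<mu>, ms) \<Rightarrow> n k l (one \<mu>) (map b ms)) = (case p of (l, \<mu>, ms) \<Rightarrow> n k l (one \<mu>) (map t ms) + (if (l, \<mu>, ms) = P0 then (if k = 1 then phi0 (b \<nu>) else 0) else 0))"
      unfolding pe case_prod_conv by (rule pw) (use pin pe in simp)
  qed
  also have "\<dots> = (\<Sum>(l, \<mu>, ms)\<in>JM Sx k \<nu>. n k l (one \<mu>) (map t ms)) + (\<Sum>p\<in>JM Sx k \<nu>. if p = P0 then (if k = 1 then phi0 (b \<nu>) else 0) else 0)"
    by (simp add: sum.distrib case_prod_beta)
  also have "(\<Sum>p\<in>JM Sx k \<nu>. if p = P0 then (if k = 1 then phi0 (b \<nu>) else 0) else 0) = (if k = 1 then phi0 (b \<nu>) else 0)"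
    using P0in fin JM_finite by (simp add: sum.delta)
  also have "(\<Sum>(l, \<mu>, ms)\<in>JM Sx k \<nu>. n k l (one \<mu>) (map t ms)) = ext_mod G n one (replicate k t) \<nu>"
    unfolding ext_mod_rep[OF one_nov tn fin s1 st] length_replicate
    by (intro sum.cong[OF refl]) (auto simp: JM_def map_zip_replicate)
  finally show ?thesis .
qed

end



context S begin

lemma pm:
  assumes bg: "gapped G b" and b0: "b 0 = 0" and nuG: "\<nu> \<in> G"
  shows "ext_mod G n one (replicate a b @ [(\<lambda>\<mu>. if \<mu> = \<nu> then c else 0)] @ replicate j b) \<nu>
       = (if a = 0 \<and> j = 0 then phi0 c else 0)"
proof -
  define X0 where "X0 = (\<lambda>\<mu>::real. if \<mu> = \<nu> then c else 0)"
  define xs where "xs = replicate a b @ [X0] @ replicate j b"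
  define K where "K = Suc (a + j)"
  have lx: "length xs = K" unfolding xs_def K_def by simp
  have xa: "xs ! a = X0" unfolding xs_def by (simp add: nth_append)
  have xi: "xs ! i = b" if "i < K" "i \<noteq> a" for i
  proof (cases "i < a")
    case True then show ?thesis unfolding xs_def by (simp add: nth_append)
  next
    case False
    then have "i > a" using that by simp
    then show ?thesis using that unfolding xs_def K_def by (simp add: nth_append)
  qed
  have X0g: "gapped G X0" unfolding X0_def gapped_def using nuG by auto
  have xg: "\<forall>z\<in>set xs. gapped G z" unfolding xs_def using bg X0g by auto
  have xn: "set xs \<subseteq> nov" using xg gapped_nov by blast
  define Sx where "Sx = G \<inter> {..\<nu>}"
  have fin: "finite Sx" unfolding Sx_def by (rule Gfin)
  have s1: "supp_le \<nu> one \<subseteq> Sx" unfolding Sx_def by (rule gapped_supp[OF onegap])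
  have sx: "\<forall>z\<in>set xs. supp_le \<nu> z \<subseteq> Sx" unfolding Sx_def using gapped_supp xg by blast
  define P0 where "P0 = ((0::real), (0::real), [\<nu>])"
  have P0in: "a = 0 \<and> j = 0 \<Longrightarrow> P0 \<in> JM Sx K \<nu>" unfolding P0_def Sx_def JM_def K_def using G0 nuG Gnn by auto
  have pw: "n K l (one \<mu>) (map (\<lambda>(x, \<mu>). x \<mu>) (zip xs ms)) = (if (l, \<mu>, ms) = P0 then (if a = 0 \<and> j = 0 then phi0 c else 0) else 0)"
    if p: "(l, \<mu>, ms) \<in> JM Sx K \<nu>" for l \<mu> ms
  proof -
    note jp = JM_props[OF p[unfolded Sx_def]]
    define zs where "zs = map (\<lambda>(x, \<mu>). x \<mu>) (zip xs ms)"
    have lz: "length zs = K" unfolding zs_def using jp(5) lx by simp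
    have zi: "zs ! i = (xs ! i) (ms ! i)" if "i < K" for i unfolding zs_def using that jp(5) lx by simp
    show ?thesis
    proof (cases "(l, \<mu>, ms) = P0 \<and> a = 0 \<and> j = 0")
      case True
      then have "ms = [\<nu>]" "l = 0" "\<mu> = 0" "K = 1" unfolding P0_def K_def by auto
      then have "zs = [c]" unfolding zs_def xs_def X0_def using True by simp
      then show ?thesis using True \<open>K = 1\<close> \<open>l = 0\<close> \<open>\<mu> = 0\<close> by (simp add: phi0_def zs_def)
    next
      case False
      have "n K l (one \<mu>) zs = 0"
      proof (cases "X0 (ms ! a) = 0")
        case True
        then show ?thesis using zi[of a] xa lz unfolding K_def by (intro n_zero_x[of a]) auto
      next
        case False2: False
        then have ma: "ms ! a = \<nu>" unfolding X0_def by (auto split: if_splits)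
        show ?thesis
        proof (cases "a = 0 \<and> j = 0")
          case True
          then have K1: "K = 1" unfolding K_def by simp
          have "ms ! 0 = \<nu>" using ma True by simp
          then have "l = 0" "\<mu> = 0" "ms = [\<nu>]" using JM_single p[unfolded Sx_def K1] by auto
          then show ?thesis using False True unfolding P0_def by simp
        next
          case False3: False
          define i' where "i' = (if a = 0 then 1 else (0::nat))"
          have i': "i' < K" "i' \<noteq> a" using False3 unfolding i'_def K_def by auto
          have aK: "a < K" unfolding K_def by simp
          have "ms ! i' = 0" using JM_two[OF p[unfolded Sx_def] aK i'(1) i'(2)[symmetric] ma] .
          then have "zs ! i' = 0" using zi[OF i'(1)] xi[OF i'] b0 by simp
          then show ?thesis using lz i'(1) by (intro n_zero_x[of i']) auto
        qed
      qed
      then show ?thesis using False unfolding zs_def by auto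
    qed
  qed
  have "ext_mod G n one xs \<nu> = (\<Sum>(l, \<mu>, ms)\<in>JM Sx K \<nu>. n K l (one \<mu>) (map (\<lambda>(x, \<mu>). x \<mu>) (zip xs ms)))"
    unfolding ext_mod_rep[OF one_nov xn fin s1 sx] lx ..
  also have "\<dots> = (\<Sum>p\<in>JM Sx K \<nu>. if p = P0 then (if a = 0 \<and> j = 0 then phi0 c else 0) else 0)"
  proof (rule sum.cong[OF refl])
    fix p assume pin: "p \<in> JM Sx K \<nu>"
    obtain l \<mu> ms where pe: "p = (l, \<mu>, ms)" by (cases p) auto
    show "(case p of (l, \<mu>, ms) \<Rightarrow> n K l (one \<mu>) (map (\<lambda>(x, \<mu>). x \<mu>) (zip xs ms))) = (if p = P0 then (if a = 0 \<and> j = 0 then phi0 c else 0) else 0)"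
      unfolding pe case_prod_conv by (rule pw) (use pin pe in simp)
  qed
  also have "\<dots> = (if a = 0 \<and> j = 0 then phi0 c else 0)"
    using P0in fin JM_finite by (simp add: sum.delta)
  finally show ?thesis unfolding xs_def X0_def .
qed

lemma phi0_surj: "\<exists>c. phi0 c = d"
proof -
  have bij: "bij_betw (\<lambda>x::real \<Rightarrow> 'c. ext_mod G n one [x]) nov nov" using cyc by (simp add: cyclic_elem_def)
  define y where "y = (\<lambda>\<mu>::real. if \<mu> = 0 then d else 0)"
  have "gapped G y" unfolding y_def gapped_def using G0 by auto
  then have "y \<in> nov" by (rule gapped_nov)
  then have "y \<in> (\<lambda>x::real \<Rightarrow> 'c. ext_mod G n one [x]) ` nov" using bij_betw_imp_surj_on[OF bij] by simp
  then obtain x where x: "x \<in> nov" "y = ext_mod G n one [x]" by blast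
  have "d = y 0" unfolding y_def by simp
  also have "\<dots> = phi0 (x 0)" using x coeff0 by simp
  finally show ?thesis by (rule exI[where x="x 0", OF sym])
qed

lemma IM_single: "IM y [x] \<nu> = {(l, \<mu>, [m]) | l \<mu> m. l \<in> G \<and> y \<mu> \<noteq> 0 \<and> x m \<noteq> 0 \<and> l + \<mu> + m = \<nu>}"
proof
  show "IM y [x] \<nu> \<subseteq> {(l, \<mu>, [m]) | l \<mu> m. l \<in> G \<and> y \<mu> \<noteq> 0 \<and> x m \<noteq> 0 \<and> l + \<mu> + m = \<nu>}"
  proof
    fix p assume "p \<in> IM y [x] \<nu>"
    then obtain l \<mu> ms where pe: "p = (l, \<mu>, ms)" "l \<in> G" "y \<mu> \<noteq> 0" "length ms = 1" "x (ms ! 0) \<noteq> 0" "l + \<mu> + sum_list ms = \<nu>"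
      unfolding IM_def by auto
    obtain z where "ms = [z]" using pe(4) by (metis One_nat_def length_0_conv length_Suc_conv)
    then show "p \<in> {(l, \<mu>, [m]) | l \<mu> m. l \<in> G \<and> y \<mu> \<noteq> 0 \<and> x m \<noteq> 0 \<and> l + \<mu> + m = \<nu>}" using pe by auto
  qed
  show "{(l, \<mu>, [m]) | l \<mu> m. l \<in> G \<and> y \<mu> \<noteq> 0 \<and> x m \<noteq> 0 \<and> l + \<mu> + m = \<nu>} \<subseteq> IM y [x] \<nu>"
    unfolding IM_def by auto
qed

lemma shift_lemma: "ext_mod G n one [(\<lambda>\<mu>. x (\<mu> - g))] \<nu> = ext_mod G n one [x] (\<nu> - g)"
  unfolding ext_mod_IM IM_single
proof (rule sum.reindex_bij_witness[where j = "\<lambda>(l, \<mu>, ms). (l, \<mu>, map (\<lambda>m. m - g) ms)"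
      and i = "\<lambda>(l, \<mu>, ms). (l, \<mu>, map (\<lambda>m. m + g) ms)"])
  fix a assume "a \<in> {(l, \<mu>, [m]) |l \<mu> m. l \<in> G \<and> one \<mu> \<noteq> 0 \<and> x (m - g) \<noteq> 0 \<and> l + \<mu> + m = \<nu>}"
  then obtain l \<mu> m where a: "a = (l, \<mu>, [m])" "l \<in> G" "one \<mu> \<noteq> 0" "x (m - g) \<noteq> 0" "l + \<mu> + m = \<nu>" by blast
  show "(case case a of (l, \<mu>, ms) \<Rightarrow> (l, \<mu>, map (\<lambda>m. m - g) ms) of (l, \<mu>, ms) \<Rightarrow> (l, \<mu>, map (\<lambda>m. m + g) ms)) = a"
    using a by simp
  have "(l, \<mu>, [m - g]) \<in> {(l, \<mu>, [m]) |l \<mu> m. l \<in> G \<and> one \<mu> \<noteq> 0 \<and> x m \<noteq> 0 \<and> l + \<mu> + m = \<nu> - g}"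
    using a by auto
  then show "(case a of (l, \<mu>, ms) \<Rightarrow> (l, \<mu>, map (\<lambda>m. m - g) ms)) \<in> {(l, \<mu>, [m]) |l \<mu> m. l \<in> G \<and> one \<mu> \<noteq> 0 \<and> x m \<noteq> 0 \<and> l + \<mu> + m = \<nu> - g}"
    using a by simp
  show "(case case a of (l, \<mu>, ms) \<Rightarrow> (l, \<mu>, map (\<lambda>m. m - g) ms) of (l, \<mu>, ms) \<Rightarrow> n (length [x]) l (one \<mu>) (map (\<lambda>(x, \<mu>). x \<mu>) (zip [x] ms))) =
    (case a of (l, \<mu>, ms) \<Rightarrow> n (length [\<lambda>\<mu>. x (\<mu> - g)]) l (one \<mu>) (map (\<lambda>(x, \<mu>). x \<mu>) (zip [\<lambda>\<mu>. x (\<mu> - g)] ms)))"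
    using a by simp
next
  fix b assume "b \<in> {(l, \<mu>, [m]) |l \<mu> m. l \<in> G \<and> one \<mu> \<noteq> 0 \<and> x m \<noteq> 0 \<and> l + \<mu> + m = \<nu> - g}"
  then obtain l \<mu> m where a: "b = (l, \<mu>, [m])" "l \<in> G" "one \<mu> \<noteq> 0" "x m \<noteq> 0" "l + \<mu> + m = \<nu> - g" by blast
  show "(case case b of (l, \<mu>, ms) \<Rightarrow> (l, \<mu>, map (\<lambda>m. m + g) ms) of (l, \<mu>, ms) \<Rightarrow> (l, \<mu>, map (\<lambda>m. m - g) ms)) = b"
    using a by simp
  have "(l, \<mu>, [m + g]) \<in> {(l, \<mu>, [m]) |l \<mu> m. l \<in> G \<and> one \<mu> \<noteq> 0 \<and> x (m - g) \<noteq> 0 \<and> l + \<mu> + m = \<nu>}"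
    using a by auto
  then show "(case b of (l, \<mu>, ms) \<Rightarrow> (l, \<mu>, map (\<lambda>m. m + g) ms)) \<in> {(l, \<mu>, [m]) |l \<mu> m. l \<in> G \<and> one \<mu> \<noteq> 0 \<and> x (m - g) \<noteq> 0 \<and> l + \<mu> + m = \<nu>}"
    using a by simp
qed

lemma phi0_inj: assumes "phi0 c = 0" shows "c = 0"
proof (rule ccontr)
  assume c: "c \<noteq> 0"
  have bij: "bij_betw (\<lambda>x::real \<Rightarrow> 'c. ext_mod G n one [x]) nov nov" using cyc by (simp add: cyclic_elem_def)
  have inj: "inj_on (\<lambda>x::real \<Rightarrow> 'c. ext_mod G n one [x]) nov" using bij by (rule bij_betw_imp_inj_on)
  have sur: "(\<lambda>x::real \<Rightarrow> 'c. ext_mod G n one [x]) ` nov = nov" using bij by (rule bij_betw_imp_surj_on)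
  define x where "x = (\<lambda>\<mu>::real. if \<mu> = 0 then c else 0)"
  have xg: "gapped G x" unfolding x_def gapped_def using G0 by auto
  have xn: "x \<in> nov" using xg by (rule gapped_nov)
  define y where "y = ext_mod G n one [x]"
  have yg: "gapped G y" unfolding y_def using onegap xg by (intro ext_mod_gapped) auto
  have y0: "y 0 = 0" unfolding y_def using coeff0[OF xn] assms by (simp add: x_def)
  show False
  proof (cases "\<exists>p\<in>G. 0 < p")
    case False
    have "y = (\<lambda>_. 0)"
    proof
      fix \<nu> show "y \<nu> = 0"
      proof (rule ccontr)
        assume "y \<nu> \<noteq> 0"
        then have "\<nu> \<in> G" "\<nu> \<noteq> 0" using yg y0 unfolding gapped_def by auto
        then show False using False Gnn by force
      qed
    qed
    moreover have "ext_mod G n one [(\<lambda>_. 0)] = (\<lambda>_. 0)"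
      by (rule ext) (rule ext_mod_zero_x[of 0], auto)
    moreover have "(\<lambda>_. 0) \<in> (nov :: (real \<Rightarrow> 'c) set)" using nov_zero by (simp add: zero_fun_def)
    ultimately have "ext_mod G n one [x] = ext_mod G n one [(\<lambda>_. 0)]" "(\<lambda>_. 0) \<in> (nov :: (real \<Rightarrow> 'c) set)"
      unfolding y_def by auto
    then have "x = (\<lambda>_. 0)" using inj_onD[OF inj _ xn] by blast
    then have "x 0 = 0" by simp
    then show False using c unfolding x_def by simp
  next
    case True
    then obtain p where p: "p \<in> G" "0 < p" by blast
    define P where "P = G \<inter> {0<..p}"
    have Pfin: "finite P" unfolding P_def using Gfin[of p] by (rule finite_subset[rotated]) auto
    have Pne: "P \<noteq> {}" unfolding P_def using p by auto
    define g where "g = Min P"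
    have gP: "g \<in> P" unfolding g_def using Pfin Pne by (rule Min_in)
    then have gpos: "0 < g" "g \<in> G" unfolding P_def by auto
    have gmin: "g \<le> q" if "q \<in> G" "0 < q" for q
    proof (cases "q \<le> p")
      case True then have "q \<in> P" unfolding P_def using that by auto
      then show ?thesis unfolding g_def using Pfin by simp
    next
      case False then show ?thesis using gP unfolding P_def by auto
    qed
    define y' where "y' = (\<lambda>\<nu>. y (\<nu> + g))"
    have y'n: "y' \<in> nov" unfolding nov_def
    proof safe
      fix \<nu> :: real assume "\<nu> < 0"
      show "y' \<nu> = 0"
      proof (rule ccontr)
        assume "y' \<nu> \<noteq> 0"
        then have "\<nu> + g \<in> G" "\<nu> + g \<noteq> 0" using yg y0 unfolding y'_def gapped_def by auto
        then have "0 < \<nu> + g" using Gnn by force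
        then have "g \<le> \<nu> + g" using gmin \<open>\<nu> + g \<in> G\<close> by blast
        then show False using \<open>\<nu> < 0\<close> by simp
      qed
    next
      fix c' :: real
      have "{\<nu>. \<nu> \<le> c' \<and> y' \<nu> \<noteq> 0} = (\<lambda>\<mu>. \<mu> - g) ` {\<mu>. \<mu> \<le> c' + g \<and> y \<mu> \<noteq> 0}"
        unfolding y'_def by (auto simp: image_iff intro!: exI[where x="_ + g"])
      moreover have "finite {\<mu>. \<mu> \<le> c' + g \<and> y \<mu> \<noteq> 0}" using gapped_nov[OF yg] by (rule nov_fin)
      ultimately show "finite {\<nu>. \<nu> \<le> c' \<and> y' \<nu> \<noteq> 0}" by simp
    qed
    then have "y' \<in> (\<lambda>x::real \<Rightarrow> 'c. ext_mod G n one [x]) ` nov" using sur by simp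
    then obtain x' where x': "x' \<in> nov" "y' = ext_mod G n one [x']" by blast
    define x'' where "x'' = (\<lambda>\<mu>. x' (\<mu> - g))"
    have x''n: "x'' \<in> nov" unfolding nov_def
    proof safe
      fix \<nu> :: real assume "\<nu> < 0"
      then show "x'' \<nu> = 0" using x'(1) gpos unfolding x''_def nov_def by auto
    next
      fix c' :: real
      have "{\<nu>. \<nu> \<le> c' \<and> x'' \<nu> \<noteq> 0} = (\<lambda>\<mu>. \<mu> + g) ` {\<mu>. \<mu> \<le> c' - g \<and> x' \<mu> \<noteq> 0}"
        unfolding x''_def by (auto simp: image_iff intro!: exI[where x="_ - g"])
      moreover have "finite {\<mu>. \<mu> \<le> c' - g \<and> x' \<mu> \<noteq> 0}" using x'(1) by (rule nov_fin)
      ultimately show "finite {\<nu>. \<nu> \<le> c' \<and> x'' \<nu> \<noteq> 0}" by simp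
    qed
    have "ext_mod G n one [x''] = y"
    proof
      fix \<nu>
      have "ext_mod G n one [x''] \<nu> = ext_mod G n one [x'] (\<nu> - g)" unfolding x''_def by (rule shift_lemma)
      also have "\<dots> = y' (\<nu> - g)" using x'(2) by simp
      finally show "ext_mod G n one [x''] \<nu> = y \<nu>" unfolding y'_def by simp
    qed
    then have "x'' = x" using inj_onD[OF inj _ x''n xn] unfolding y_def by blast
    moreover have "x'' 0 = 0" using x'(1) gpos unfolding x''_def nov_def by auto
    ultimately have "x 0 = 0" by simp
    then show False using c unfolding x_def by simp
  qed
qed

end



context S begin

lemma tsums_iff:
  fixes f :: "nat \<Rightarrow> real \<Rightarrow> 'x::comm_monoid_add"
  assumes vp: "\<And>c \<nu> k. \<nu> \<le> c \<Longrightarrow> N c < k \<Longrightarrow> f k \<nu> = 0"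
  shows "T_sums f 0 \<longleftrightarrow> (\<forall>\<nu>. (\<Sum>k<N \<nu> + 2. f k \<nu>) = 0)"
proof
  assume T: "T_sums f 0"
  show "\<forall>\<nu>. (\<Sum>k<N \<nu> + 2. f k \<nu>) = 0"
  proof
    fix \<nu>
    obtain K0 where K0: "\<forall>N'\<ge>K0. \<forall>\<mu>\<le>\<nu>. (\<Sum>k<N'. f k \<mu>) = 0" using T unfolding T_sums_def by fastforce
    have v: "\<forall>k\<ge>N \<nu> + 2. f k \<nu> = 0" using vp[of \<nu> \<nu>] by auto
    have "(\<Sum>k<N \<nu> + 2. f k \<nu>) = (\<Sum>k<max (N \<nu> + 2) K0. f k \<nu>)"
      using v by (rule sum_stab) auto
    also have "\<dots> = 0" using K0 by auto
    finally show "(\<Sum>k<N \<nu> + 2. f k \<nu>) = 0" .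
  qed
next
  assume Z: "\<forall>\<nu>. (\<Sum>k<N \<nu> + 2. f k \<nu>) = 0"
  show "T_sums f 0" unfolding T_sums_def
  proof (intro allI)
    fix c
    show "\<exists>K. \<forall>N'\<ge>K. \<forall>\<nu>\<le>c. (\<Sum>k<N'. f k \<nu>) = (0 :: real \<Rightarrow> 'x) \<nu>"
    proof (rule exI[of _ "N c + 2"], intro allI impI)
      fix N' \<nu>
      assume N': "N' \<ge> N c + 2" and nc: "\<nu> \<le> c"
      have v1: "\<forall>k\<ge>N c + 2. f k \<nu> = 0" using vp[of \<nu> c] nc by auto
      have v2: "\<forall>k\<ge>N \<nu> + 2. f k \<nu> = 0" using vp[of \<nu> \<nu>] by auto
      have "(\<Sum>k<N'. f k \<nu>) = (\<Sum>k<max N' (N \<nu> + 2). f k \<nu>)"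
        using v1 N' by (intro sum_stab[of "N c + 2"]) auto
      also have "\<dots> = (\<Sum>k<N \<nu> + 2. f k \<nu>)"
        using v2 by (intro sum_stab[symmetric, of "N \<nu> + 2"]) auto
      finally show "(\<Sum>k<N'. f k \<nu>) = 0 \<nu>" using Z by simp
    qed
  qed
qed

definition good :: "(real \<Rightarrow> 'c) \<Rightarrow> bool" where "good b \<longleftrightarrow> gapped G b \<and> b 0 = 0"

lemma good_nov: "good b \<Longrightarrow> b \<in> nov" unfolding good_def using gapped_nov by blast

lemma vp_mod: "good b \<Longrightarrow> \<nu> \<le> c \<Longrightarrow> N c < k \<Longrightarrow> ext_mod G n one (replicate k b) \<nu> = 0"
  using good_nov[of b] unfolding good_def
  by (intro ext_mod_vanish[where I="{..<k}" and b=b and c=c]) (auto simp: one_nov)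

lemma vp_alg: "good b \<Longrightarrow> \<nu> \<le> c \<Longrightarrow> N c < k \<Longrightarrow> ext_alg G m (replicate k b) \<nu> = 0"
  using good_nov[of b] unfolding good_def
  by (intro ext_alg_vanish[where I="{..<k}" and b=b and c=c]) auto

definition Dz :: "(real \<Rightarrow> 'c) \<Rightarrow> bool" where
  "Dz b \<longleftrightarrow> (\<forall>\<nu>. (\<Sum>k<N \<nu> + 2. ext_mod G n one (replicate k b) \<nu>) = 0)"

lemma Dz_iff: "good b \<Longrightarrow> T_sums (\<lambda>k. ext_mod G n one (replicate k b)) 0 \<longleftrightarrow> Dz b"
  unfolding Dz_def by (rule tsums_iff) (rule vp_mod)

lemma sum_KL:
  assumes "good b" "good t" "\<nu> \<in> G" "\<forall>\<mu><\<nu>. t \<mu> = b \<mu>" "t \<nu> = 0" "1 < K"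
  shows "(\<Sum>k<K. ext_mod G n one (replicate k b) \<nu>) = (\<Sum>k<K. ext_mod G n one (replicate k t) \<nu>) + phi0 (b \<nu>)"
proof -
  have "(\<Sum>k<K. ext_mod G n one (replicate k b) \<nu>) = (\<Sum>k<K. ext_mod G n one (replicate k t) \<nu> + (if k = 1 then phi0 (b \<nu>) else 0))"
    using assms unfolding good_def by (intro sum.cong[OF refl] KL) auto
  also have "\<dots> = (\<Sum>k<K. ext_mod G n one (replicate k t) \<nu>) + (\<Sum>k<K. if k = 1 then phi0 (b \<nu>) else 0)"
    by (rule sum.distrib)
  also have "(\<Sum>k<K. if k = 1 then phi0 (b \<nu>) else 0) = phi0 (b \<nu>)"
    using assms(6) by (simp add: sum.delta)
  finally show ?thesis .
qed

lemma uniq: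
  assumes gb: "good b" and gb': "good b'" and Db: "Dz b" and Db': "Dz b'"
  shows "b = b'"
proof (rule ccontr)
  assume "b \<noteq> b'"
  then obtain \<mu>1 where \<mu>1: "b \<mu>1 \<noteq> b' \<mu>1" by (auto simp: fun_eq_iff)
  define Dif where "Dif = {\<mu>. b \<mu> \<noteq> b' \<mu>} \<inter> {..\<mu>1}"
  have DG: "Dif \<subseteq> G \<inter> {..\<mu>1}"
  proof
    fix \<mu> assume "\<mu> \<in> Dif"
    then have "b \<mu> \<noteq> 0 \<or> b' \<mu> \<noteq> 0" "\<mu> \<le> \<mu>1" unfolding Dif_def by auto
    then show "\<mu> \<in> G \<inter> {..\<mu>1}" using gb gb' unfolding good_def gapped_def by auto
  qed
  have Dfin: "finite Dif" using DG Gfin by (rule finite_subset)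
  have Dne: "Dif \<noteq> {}" using \<mu>1 unfolding Dif_def by auto
  define \<nu>0 where "\<nu>0 = Min Dif"
  have \<nu>0D: "\<nu>0 \<in> Dif" unfolding \<nu>0_def using Dfin Dne by (rule Min_in)
  then have \<nu>0G: "\<nu>0 \<in> G" and ne: "b \<nu>0 \<noteq> b' \<nu>0" using DG unfolding Dif_def by auto
  have below: "b \<mu> = b' \<mu>" if "\<mu> < \<nu>0" for \<mu>
  proof (rule ccontr)
    assume "b \<mu> \<noteq> b' \<mu>"
    moreover have "\<mu> \<le> \<mu>1" using that \<nu>0D unfolding Dif_def by auto
    ultimately have "\<mu> \<in> Dif" unfolding Dif_def by auto
    then have "\<nu>0 \<le> \<mu>" unfolding \<nu>0_def using Dfin by simp
    then show False using that by simp
  qed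
  define t where "t = (\<lambda>\<mu>. if \<mu> < \<nu>0 then b \<mu> else 0)"
  have gt: "good t" using gb unfolding good_def t_def gapped_def by auto
  have tb: "\<forall>\<mu><\<nu>0. t \<mu> = b \<mu>" and tb': "\<forall>\<mu><\<nu>0. t \<mu> = b' \<mu>" and tn: "t \<nu>0 = 0"
    unfolding t_def using below by auto
  define K where "K = N \<nu>0 + 2"
  have K1: "1 < K" unfolding K_def by simp
  have "0 = (\<Sum>k<K. ext_mod G n one (replicate k t) \<nu>0) + phi0 (b \<nu>0)"
    using sum_KL[OF gb gt \<nu>0G tb tn K1] Db unfolding Dz_def K_def by simp
  moreover have "0 = (\<Sum>k<K. ext_mod G n one (replicate k t) \<nu>0) + phi0 (b' \<nu>0)"
    using sum_KL[OF gb' gt \<nu>0G tb' tn K1] Db' unfolding Dz_def K_def by simp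
  ultimately have "phi0 (b \<nu>0) = phi0 (b' \<nu>0)" by (metis add_left_cancel)
  then have "phi0 (b \<nu>0 - b' \<nu>0) = 0" by (simp add: phi0_diff)
  then have "b \<nu>0 - b' \<nu>0 = 0" by (rule phi0_inj)
  then show False using ne by simp
qed

end



context S begin

definition RR :: "(real \<times> real) set" where "RR = {(\<mu>, \<nu>). \<mu> \<in> G \<and> \<mu> < \<nu>}"

lemma wf_RR: "wf RR"
proof (rule wf_subset[OF wf_inv_image[OF wf_less_than, of "\<lambda>x. card (G \<inter> {..<x})"]])
  show "RR \<subseteq> inv_image less_than (\<lambda>x. card (G \<inter> {..<x}))"
  proof
    fix p assume "p \<in> RR"
    then obtain \<mu> \<nu> where p: "p = (\<mu>, \<nu>)" "\<mu> \<in> G" "\<mu> < \<nu>" unfolding RR_def by auto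
    have "G \<inter> {..<\<mu>} \<subset> G \<inter> {..<\<nu>}" using p by auto
    moreover have "finite (G \<inter> {..<\<nu>})" using Gfin[of \<nu>] by (rule finite_subset[rotated]) auto
    ultimately have "card (G \<inter> {..<\<mu>}) < card (G \<inter> {..<\<nu>})" by (rule psubset_card_mono[rotated])
    then show "p \<in> inv_image less_than (\<lambda>x. card (G \<inter> {..<x}))" using p by simp
  qed
qed

definition trunc :: "(real \<Rightarrow> 'c) \<Rightarrow> real \<Rightarrow> real \<Rightarrow> 'c" where
  "trunc f \<nu> = (\<lambda>\<mu>. if \<mu> \<in> G \<and> 0 < \<mu> \<and> \<mu> < \<nu> then f \<mu> else 0)"

definition Hf :: "(real \<Rightarrow> 'c) \<Rightarrow> real \<Rightarrow> 'c" where
  "Hf f \<nu> = (if \<nu> \<in> G \<and> 0 < \<nu> then (SOME c. phi0 c = (\<Sum>k<N \<nu> + 2. ext_mod G n one (replicate k (trunc f \<nu>)) \<nu>)) else 0)"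

definition bsol :: "real \<Rightarrow> 'c" where "bsol = wfrec RR Hf"

lemma bsol_eq: "bsol \<nu> = (if \<nu> \<in> G \<and> 0 < \<nu> then (SOME c. phi0 c = (\<Sum>k<N \<nu> + 2. ext_mod G n one (replicate k (trunc bsol \<nu>)) \<nu>)) else 0)"
proof -
  have "bsol \<nu> = Hf (cut bsol RR \<nu>) \<nu>" unfolding bsol_def by (rule wfrec[OF wf_RR])
  moreover have "trunc (cut bsol RR \<nu>) \<nu> = trunc bsol \<nu>"
    unfolding trunc_def by (auto simp: cut_def RR_def)
  ultimately show ?thesis unfolding Hf_def by simp
qed

lemma bsol_good: "good bsol"
  unfolding good_def gapped_def using bsol_eq by (metis less_irrefl)

lemma trunc_good: "good (trunc f \<nu>)"
  unfolding good_def gapped_def trunc_def by auto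

lemma bsol_Dz: "Dz bsol"
  unfolding Dz_def
proof
  fix \<nu>
  show "(\<Sum>k<N \<nu> + 2. ext_mod G n one (replicate k bsol) \<nu>) = 0"
  proof (cases "\<nu> \<in> G \<and> 0 < \<nu>")
    case True
    let ?t = "trunc bsol \<nu>"
    define X where "X = (\<Sum>k<N \<nu> + 2. ext_mod G n one (replicate k ?t) \<nu>)"
    have "bsol \<nu> = (SOME c. phi0 c = X)" using bsol_eq[of \<nu>] True unfolding X_def by simp
    then have ph: "phi0 (bsol \<nu>) = (\<Sum>k<N \<nu> + 2. ext_mod G n one (replicate k ?t) \<nu>)"
      using someI_ex[OF phi0_surj[of X]] unfolding X_def[symmetric] by simp
    have tb: "\<forall>\<mu><\<nu>. ?t \<mu> = bsol \<mu>"
    proof (intro allI impI)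
      fix \<mu> assume "\<mu> < \<nu>"
      show "?t \<mu> = bsol \<mu>"
      proof (cases "\<mu> \<in> G \<and> 0 < \<mu>")
        case True then show ?thesis using \<open>\<mu> < \<nu>\<close> unfolding trunc_def by simp
      next
        case False
        have "bsol \<mu> = 0" by (rule bsol_eq[of \<mu>, unfolded if_not_P[OF False]])
        then show ?thesis unfolding trunc_def by simp
      qed
    qed
    have tn: "?t \<nu> = 0" unfolding trunc_def by simp
    have "(\<Sum>k<N \<nu> + 2. ext_mod G n one (replicate k bsol) \<nu>) = (\<Sum>k<N \<nu> + 2. ext_mod G n one (replicate k ?t) \<nu>) + phi0 (bsol \<nu>)"
      using True by (intro sum_KL bsol_good trunc_good tb tn) auto
    also have "\<dots> = 0" unfolding ph using char2D by simp
    finally show ?thesis .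
  next
    case False
    show ?thesis
    proof (cases "\<nu> \<in> G")
      case False
      have "\<forall>k. ext_mod G n one (replicate k bsol) \<nu> = 0"
      proof
        fix k
        have "gapped G (ext_mod G n one (replicate k bsol))"
          using bsol_good onegap unfolding good_def by (intro ext_mod_gapped) auto
        then show "ext_mod G n one (replicate k bsol) \<nu> = 0" using False unfolding gapped_def by blast
      qed
      then show ?thesis by simp
    next
      case True
      then have z: "\<nu> = 0" using False Gnn by force
      have N0: "N 0 = 0" unfolding N_def by auto
      have "\<forall>k<N \<nu> + 2. ext_mod G n one (replicate k bsol) \<nu> = 0"
      proof (intro allI impI)
        fix k
        show "ext_mod G n one (replicate k bsol) \<nu> = 0"
        proof (cases k)
          case 0 then show ?thesis using cyc z unfolding cyclic_elem_def by simp
        next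
          case (Suc k') then show ?thesis using vp_mod[OF bsol_good, of \<nu> 0 k] z N0 by simp
        qed
      qed
      then show ?thesis by simp
    qed
  qed
qed

end



context S begin

lemma rel_k:
  assumes gb: "good b"
  shows "(\<Sum>l\<le>k. ext_mod G n (ext_mod G n one (replicate l b)) (replicate (k - l) b) \<nu>)
       + (\<Sum>a\<le>k. \<Sum>c\<in>{a..k}. ext_mod G n one (replicate a b @ [ext_alg G m (replicate (c - a) b)] @ replicate (k - c) b) \<nu>) = 0"
proof -
  let ?xs = "replicate k b"
  have xs: "set ?xs \<subseteq> nov" using good_nov[OF gb] by auto
  have R: "(\<Sum>l\<le>length ?xs. ext_mod G n (ext_mod G n one (take l ?xs)) (drop l ?xs))
        + (\<Sum>a\<le>length ?xs. \<Sum>c\<in>{a..length ?xs}.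
           ext_mod G n one (take a ?xs @ [ext_alg G m (take (c - a) (drop a ?xs))] @ drop c ?xs)) = 0"
    using md one_nov xs unfolding ainf_mod_def by blast
  have R2: "(\<Sum>l\<le>k. ext_mod G n (ext_mod G n one (take l ?xs)) (drop l ?xs) \<nu>)
        + (\<Sum>a\<le>k. \<Sum>c\<in>{a..k}.
           ext_mod G n one (take a ?xs @ [ext_alg G m (take (c - a) (drop a ?xs))] @ drop c ?xs) \<nu>) = 0"
    using fun_cong[OF R, of \<nu>] unfolding plus_fun_apply sum_fun_apply length_replicate by simp
  have e1: "(\<Sum>l\<le>k. ext_mod G n (ext_mod G n one (take l ?xs)) (drop l ?xs) \<nu>)
     = (\<Sum>l\<le>k. ext_mod G n (ext_mod G n one (replicate l b)) (replicate (k - l) b) \<nu>)"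
    by (intro sum.cong[OF refl]) (simp add: take_replicate drop_replicate min_def)
  have e2: "(\<Sum>a\<le>k. \<Sum>c\<in>{a..k}.
           ext_mod G n one (take a ?xs @ [ext_alg G m (take (c - a) (drop a ?xs))] @ drop c ?xs) \<nu>)
     = (\<Sum>a\<le>k. \<Sum>c\<in>{a..k}. ext_mod G n one (replicate a b @ [ext_alg G m (replicate (c - a) b)] @ replicate (k - c) b) \<nu>)"
    by (intro sum.cong[OF refl]) (auto simp: take_replicate drop_replicate min_def)
  show ?thesis using R2 unfolding e1 e2 .
qed

lemma inner_shift:
  "(\<Sum>c\<in>{a..k}. g (c - a) (k - c)) = (\<Sum>r\<le>k - a. g r (k - a - r))" if "a \<le> k" for g :: "nat \<Rightarrow> nat \<Rightarrow> 'x::comm_monoid_add"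
proof -
  have "{a..k} = {0 + a..(k - a) + a}" using that by simp
  then have "(\<Sum>c\<in>{a..k}. g (c - a) (k - c)) = (\<Sum>r\<in>{0..k - a}. g (r + a - a) (k - (r + a)))"
    by (simp only: sum.shift_bounds_cl_nat_ivl)
  also have "\<dots> = (\<Sum>r\<le>k - a. g r (k - a - r))" by (simp add: atLeast0AtMost add.commute)
  finally show ?thesis .
qed

end



context S begin

lemma nth_mid_a: "(replicate a b @ [u] @ replicate j b) ! a = u"
  by (simp add: nth_append)
lemma nth_mid_other: "i < Suc (a + j) \<Longrightarrow> i \<noteq> a \<Longrightarrow> (replicate a b @ [u] @ replicate j b) ! i = b"
  by (cases "i < a") (auto simp: nth_append)
lemma upd_mid: "(replicate a b @ [u] @ replicate j b)[a := v] = replicate a b @ [v] @ replicate j b"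
  by (simp add: list_update_append)

lemma mid_nov: "b \<in> nov \<Longrightarrow> u \<in> nov \<Longrightarrow> set (replicate a b @ [u] @ replicate j b) \<subseteq> nov"
  by auto

lemma h_vanish_aj:
  assumes gb: "good b" and u: "u \<in> nov" and aj: "N \<nu> < a \<or> N \<nu> < j"
  shows "ext_mod G n one (replicate a b @ [u] @ replicate j b) \<nu> = 0"
proof -
  have bn: "b \<in> nov" using gb by (rule good_nov)
  have bg: "gapped G b" "b 0 = 0" using gb unfolding good_def by auto
  let ?xs = "replicate a b @ [u] @ replicate j b"
  have xs: "set ?xs \<subseteq> nov" using bn u by auto
  show ?thesis using aj
  proof
    assume "N \<nu> < a"
    show ?thesis
      by (rule ext_mod_vanish[OF one_nov xs, of "{..<a}" b \<nu>]) (use bg \<open>N \<nu> < a\<close> in \<open>auto simp: nth_append\<close>)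
  next
    assume "N \<nu> < j"
    have I: "{Suc a..<Suc a + j} \<subseteq> {..<length ?xs}" by auto
    have Ib: "\<forall>i\<in>{Suc a..<Suc a + j}. ?xs ! i = b" using nth_mid_other[of _ a j b u] by auto
    show ?thesis
      by (rule ext_mod_vanish[OF one_nov xs I Ib bg, of \<nu>]) (use \<open>N \<nu> < j\<close> in auto)
  qed
qed

lemma h_vanish_r:
  assumes gb: "good b" and u: "u \<in> nov" and uz: "\<forall>\<mu>\<le>\<nu>. u \<mu> = 0"
  shows "ext_mod G n one (replicate a b @ [u] @ replicate j b) \<nu> = 0"
proof -
  have bn: "b \<in> nov" using gb by (rule good_nov)
  have z: "(0::real\<Rightarrow>'c) \<in> nov" by (rule nov_zero)
  have "ext_mod G n one (replicate a b @ [u] @ replicate j b) \<nu> = ext_mod G n one (replicate a b @ [0] @ replicate j b) \<nu>"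
  proof (rule ext_mod_local[OF one_nov one_nov mid_nov[OF bn u] mid_nov[OF bn z]])
    show "\<forall>i<length (replicate a b @ [u] @ replicate j b). \<forall>\<mu>\<le>\<nu>.
        ((replicate a b @ [u] @ replicate j b) ! i) \<mu> = ((replicate a b @ [0] @ replicate j b) ! i) \<mu>"
    proof (intro allI impI)
      fix i \<mu> assume i: "i < length (replicate a b @ [u] @ replicate j b)" and mu: "\<mu> \<le> \<nu>"
      show "((replicate a b @ [u] @ replicate j b) ! i) \<mu> = ((replicate a b @ [0] @ replicate j b) ! i) \<mu>"
      proof (cases "i = a")
        case True then show ?thesis using uz mu by (simp add: nth_append)
      next
        case False then show ?thesis using i nth_mid_other[of i a j b u] nth_mid_other[of i a j b 0] by simp
      qed
    qed
  qed auto
  also have "\<dots> = 0" by (rule ext_mod_zero_x[of a]) (auto simp: nth_append)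
  finally show ?thesis .
qed

end



context S begin

lemma bounding:
  assumes gb: "good b" and Db: "Dz b"
  shows "(\<Sum>k<N \<nu>0 + 2. ext_alg G m (replicate k b) \<nu>0) = 0"
proof -
  have bn: "b \<in> nov" using gb by (rule good_nov)
  have bg: "gapped G b" "b 0 = 0" using gb unfolding good_def by auto
  define Am where "Am r = ext_alg G m (replicate r b)" for r
  define E where "E l = ext_mod G n one (replicate l b)" for l
  define M where "M \<nu> = (\<Sum>k<N \<nu> + 2. Am k \<nu>)" for \<nu>
  have Amg: "gapped G (Am r)" for r unfolding Am_def using bg by (intro ext_alg_gapped) auto
  have Amn: "Am r \<in> nov" for r using Amg by (rule gapped_nov)
  have Eg: "gapped G (E l)" for l unfolding E_def using bg onegap by (intro ext_mod_gapped) auto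
  have En: "E l \<in> nov" for l using Eg by (rule gapped_nov)
  have vA: "Am r \<mu> = 0" if "\<mu> \<le> c" "N c < r" for r \<mu> c unfolding Am_def using vp_alg[OF gb that] .
  have vE: "E l \<mu> = 0" if "\<mu> \<le> c" "N c < l" for l \<mu> c unfolding E_def using vp_mod[OF gb that] .
  have stabA: "(\<Sum>r\<le>N \<nu>. Am r \<mu>) = M \<mu>" if "\<mu> \<le> \<nu>" for \<mu> \<nu>
  proof -
    have "(\<Sum>r\<le>N \<nu>. Am r \<mu>) = (\<Sum>r<Suc (N \<nu>). Am r \<mu>)" by (simp add: lessThan_Suc_atMost)
    also have "\<dots> = (\<Sum>r<N \<mu> + 2. Am r \<mu>)"
    proof (rule sum_stab2[of "min (Suc (N \<nu>)) (Suc (N \<mu>))"])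
      show "\<forall>k\<ge>min (Suc (N \<nu>)) (Suc (N \<mu>)). Am k \<mu> = 0"
      proof (intro allI impI)
        fix k assume "min (Suc (N \<nu>)) (Suc (N \<mu>)) \<le> k"
        then have "N \<nu> < k \<or> N \<mu> < k" by auto
        then show "Am k \<mu> = 0" using vA[of \<mu> \<nu> k] vA[of \<mu> \<mu> k] that by auto
      qed
    qed auto
    finally show ?thesis unfolding M_def .
  qed
  have stabE: "(\<Sum>l\<le>N \<nu>. E l \<mu>) = 0" if "\<mu> \<le> \<nu>" for \<mu> \<nu>
  proof -
    have "(\<Sum>l\<le>N \<nu>. E l \<mu>) = (\<Sum>l<Suc (N \<nu>). E l \<mu>)" by (simp add: lessThan_Suc_atMost)
    also have "\<dots> = (\<Sum>l<N \<mu> + 2. E l \<mu>)"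
    proof (rule sum_stab2[of "min (Suc (N \<nu>)) (Suc (N \<mu>))"])
      show "\<forall>k\<ge>min (Suc (N \<nu>)) (Suc (N \<mu>)). E k \<mu> = 0"
      proof (intro allI impI)
        fix k assume "min (Suc (N \<nu>)) (Suc (N \<mu>)) \<le> k"
        then have "N \<nu> < k \<or> N \<mu> < k" by auto
        then show "E k \<mu> = 0" using vE[of \<mu> \<nu> k] vE[of \<mu> \<mu> k] that by auto
      qed
    qed auto
    also have "\<dots> = 0" using Db unfolding Dz_def E_def by simp
    finally show ?thesis .
  qed
  have Mg: "M \<nu> \<noteq> 0 \<Longrightarrow> \<nu> \<in> G" for \<nu>
  proof -
    assume "M \<nu> \<noteq> 0"
    then obtain k where "Am k \<nu> \<noteq> 0" unfolding M_def by (meson sum.neutral)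
    then show "\<nu> \<in> G" using Amg[of k] unfolding gapped_def by blast
  qed
  show ?thesis
  proof (rule ccontr)
    assume "(\<Sum>k<N \<nu>0 + 2. ext_alg G m (replicate k b) \<nu>0) \<noteq> 0"
    then have M1: "M \<nu>0 \<noteq> 0" unfolding M_def Am_def .
    define Z where "Z = {\<mu>. M \<mu> \<noteq> 0} \<inter> {..\<nu>0}"
    have ZG: "Z \<subseteq> G \<inter> {..\<nu>0}" unfolding Z_def using Mg by auto
    have Zfin: "finite Z" using ZG Gfin by (rule finite_subset)
    have Zne: "Z \<noteq> {}" using M1 unfolding Z_def by auto
    define \<nu> where "\<nu> = Min Z"
    have \<nu>Z: "\<nu> \<in> Z" unfolding \<nu>_def using Zfin Zne by (rule Min_in)
    then have Mnu: "M \<nu> \<noteq> 0" and \<nu>G: "\<nu> \<in> G" using ZG unfolding Z_def by auto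
    have below: "M \<mu> = 0" if "\<mu> < \<nu>" for \<mu>
    proof (rule ccontr)
      assume "M \<mu> \<noteq> 0"
      moreover have "\<mu> \<le> \<nu>0" using that \<nu>Z unfolding Z_def by auto
      ultimately have "\<mu> \<in> Z" unfolding Z_def by auto
      then have "\<nu> \<le> \<mu>" unfolding \<nu>_def using Zfin by simp
      then show False using that by simp
    qed
    define B where "B = N \<nu>"
    define K where "K = 4 * B + 1"
    define f where "f l j = ext_mod G n (E l) (replicate j b) \<nu>" for l j
    define h where "h a r j = ext_mod G n one (replicate a b @ [Am r] @ replicate j b) \<nu>" for a r j
    have relk: "(\<Sum>l\<le>k. f l (k - l)) + (\<Sum>a\<le>k. \<Sum>c\<in>{a..k}. h a (c - a) (k - c)) = 0" for k
      using rel_k[OF gb, of k \<nu>] unfolding f_def h_def E_def Am_def .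
    have fz: "f l j = 0" if "l > B \<or> j > B" for l j
      using that
    proof
      assume "l > B"
      have "f l j = ext_mod G n 0 (replicate j b) \<nu>"
        unfolding f_def using En[of l] nov_zero bn vE[of _ \<nu> l] \<open>l > B\<close> unfolding B_def
        by (intro ext_mod_local) auto
      then show ?thesis by (simp add: ext_mod_zero_y)
    next
      assume "j > B"
      show ?thesis unfolding f_def
        by (rule ext_mod_vanish[where I="{..<j}" and b=b and c=\<nu>]) (use En bn bg \<open>j > B\<close> in \<open>auto simp: B_def\<close>)
    qed
    have hz: "h a r j = 0" if "a > B \<or> r > B \<or> j > B" for a r j
    proof (cases "r > B")
      case True
      show ?thesis unfolding h_def
        by (rule h_vanish_r[OF gb Amn]) (use vA[of _ \<nu> r] True in \<open>auto simp: B_def\<close>)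
    next
      case False
      then have "N \<nu> < a \<or> N \<nu> < j" using that unfolding B_def by auto
      then show ?thesis unfolding h_def by (rule h_vanish_aj[OF gb Amn])
    qed
    have partA: "(\<Sum>k<K. \<Sum>l\<le>k. f l (k - l)) = 0"
    proof -
      have "(\<Sum>k<K. \<Sum>l\<le>k. f l (k - l)) = (\<Sum>l\<le>B. \<Sum>j\<le>B. f l j)"
        by (rule box_sum) (use fz in \<open>auto simp: K_def\<close>)
      also have "\<dots> = (\<Sum>j\<le>B. \<Sum>l\<le>B. f l j)" by (rule sum.swap)
      also have "\<dots> = (\<Sum>j\<le>B. ext_mod G n (\<Sum>l\<le>B. E l) (replicate j b) \<nu>)"
        unfolding f_def using En bn by (subst ext_mod_sum_y) auto
      also have "\<dots> = (\<Sum>j\<le>B. ext_mod G n 0 (replicate j b) \<nu>)"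
      proof (rule sum.cong[OF refl], rule ext_mod_local)
        show "(\<Sum>l\<le>B. E l) \<in> nov" using En by (intro nov_sum) auto
        show "\<forall>\<mu>\<le>\<nu>. (\<Sum>l\<le>B. E l) \<mu> = 0 \<mu>" using stabE unfolding B_def sum_fun_apply by simp
      qed (use nov_zero bn in auto)
      also have "\<dots> = 0" by (simp add: ext_mod_zero_y)
      finally show ?thesis .
    qed
    define F where "F a s = (\<Sum>r\<le>s. h a r (s - r))" for a s
    have Fz: "F a s = 0" if "a > 2 * B \<or> s > 2 * B" for a s
      unfolding F_def
    proof (rule sum.neutral, intro ballI)
      fix r assume "r \<in> {..s}"
      then have "a > B \<or> r > B \<or> s - r > B" using that by auto
      then show "h a r (s - r) = 0" by (rule hz)
    qed
    have partB: "(\<Sum>k<K. \<Sum>a\<le>k. \<Sum>c\<in>{a..k}. h a (c - a) (k - c)) = phi0 (M \<nu>)"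
    proof -
      have "(\<Sum>k<K. \<Sum>a\<le>k. \<Sum>c\<in>{a..k}. h a (c - a) (k - c)) = (\<Sum>k<K. \<Sum>a\<le>k. F a (k - a))"
        unfolding F_def by (intro sum.cong[OF refl]) (simp add: inner_shift)
      also have "\<dots> = (\<Sum>a\<le>2 * B. \<Sum>s\<le>2 * B. F a s)"
        by (rule box_sum) (use Fz in \<open>auto simp: K_def\<close>)
      also have "\<dots> = (\<Sum>a\<le>2 * B. \<Sum>r\<le>B. \<Sum>j\<le>B. h a r j)"
      proof (rule sum.cong[OF refl])
        fix a
        have "(\<Sum>s\<le>2 * B. F a s) = (\<Sum>s<Suc (2 * B). \<Sum>r\<le>s. h a r (s - r))"
          unfolding F_def by (simp add: lessThan_Suc_atMost)
        also have "\<dots> = (\<Sum>r\<le>B. \<Sum>j\<le>B. h a r j)"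
          by (rule box_sum) (use hz in auto)
        finally show "(\<Sum>s\<le>2 * B. F a s) = (\<Sum>r\<le>B. \<Sum>j\<le>B. h a r j)" .
      qed
      also have "\<dots> = (\<Sum>a\<le>B. \<Sum>r\<le>B. \<Sum>j\<le>B. h a r j)"
        by (rule sum.mono_neutral_right) (use hz in auto)
      also have "\<dots> = (\<Sum>a\<le>B. \<Sum>j\<le>B. \<Sum>r\<le>B. h a r j)"
        by (intro sum.cong[OF refl] sum.swap)
      also have "\<dots> = (\<Sum>a\<le>B. \<Sum>j\<le>B. if a = 0 \<and> j = 0 then phi0 (M \<nu>) else 0)"
      proof (intro sum.cong[OF refl])
        fix a j
        define X where "X = (\<Sum>r\<le>B. Am r)"
        have Xn: "X \<in> nov" unfolding X_def using Amn by (intro nov_sum) auto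
        have "(\<Sum>r\<le>B. h a r j) = (\<Sum>r\<le>B. ext_mod G n one ((replicate a b @ [0] @ replicate j b)[a := Am r]) \<nu>)"
          unfolding h_def by (simp only: upd_mid)
        also have "\<dots> = ext_mod G n one ((replicate a b @ [0] @ replicate j b)[a := X]) \<nu>"
          unfolding X_def
        proof (rule ext_mod_sum_x[symmetric, OF one_nov mid_nov[OF bn nov_zero]])
          show "a < length (replicate a b @ [0] @ replicate j b)" by simp
          show "\<forall>r\<in>{..B}. Am r \<in> nov" using Amn by blast
        qed
        also have "\<dots> = ext_mod G n one (replicate a b @ [X] @ replicate j b) \<nu>" by (simp only: upd_mid)
        also have "\<dots> = ext_mod G n one (replicate a b @ [(\<lambda>\<mu>. if \<mu> = \<nu> then M \<nu> else 0)] @ replicate j b) \<nu>"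
        proof (rule ext_mod_local[OF one_nov one_nov mid_nov[OF bn Xn] mid_nov[OF bn]])
          show "(\<lambda>\<mu>. if \<mu> = \<nu> then M \<nu> else 0) \<in> nov"
            using \<nu>G by (intro gapped_nov) (auto simp: gapped_def)
          show "\<forall>i<length (replicate a b @ [X] @ replicate j b). \<forall>\<mu>\<le>\<nu>.
            ((replicate a b @ [X] @ replicate j b) ! i) \<mu> = ((replicate a b @ [(\<lambda>\<mu>. if \<mu> = \<nu> then M \<nu> else 0)] @ replicate j b) ! i) \<mu>"
          proof (intro allI impI)
            fix i \<mu> assume i: "i < length (replicate a b @ [X] @ replicate j b)" and mu: "\<mu> \<le> \<nu>"
            show "((replicate a b @ [X] @ replicate j b) ! i) \<mu> = ((replicate a b @ [(\<lambda>\<mu>. if \<mu> = \<nu> then M \<nu> else 0)] @ replicate j b) ! i) \<mu>"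
            proof (cases "i = a")
              case True
              have "X \<mu> = M \<mu>" unfolding X_def sum_fun_apply B_def using stabA[OF mu] .
              moreover have "M \<mu> = (if \<mu> = \<nu> then M \<nu> else 0)" using below mu by auto
              ultimately show ?thesis using True by (simp add: nth_append)
            next
              case False
              then show ?thesis using i nth_mid_other[of i a j b X] nth_mid_other[of i a j b "(\<lambda>\<mu>. if \<mu> = \<nu> then M \<nu> else 0)"] by simp
            qed
          qed
        qed auto
        also have "\<dots> = (if a = 0 \<and> j = 0 then phi0 (M \<nu>) else 0)"
          by (rule pm[OF bg \<nu>G])
        finally show "(\<Sum>r\<le>B. h a r j) = (if a = 0 \<and> j = 0 then phi0 (M \<nu>) else 0)" .
      qed
      also have "\<dots> = (\<Sum>a\<le>B. if a = 0 then phi0 (M \<nu>) else 0)"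
      proof (rule sum.cong[OF refl])
        fix a
        show "(\<Sum>j\<le>B. if a = 0 \<and> j = 0 then phi0 (M \<nu>) else 0) = (if a = 0 then phi0 (M \<nu>) else 0)"
          by (cases "a = 0") (simp_all add: sum.delta)
      qed
      also have "\<dots> = phi0 (M \<nu>)" by (simp add: sum.delta)
      finally show ?thesis .
    qed
    have "0 = (\<Sum>k<K. (\<Sum>l\<le>k. f l (k - l)) + (\<Sum>a\<le>k. \<Sum>c\<in>{a..k}. h a (c - a) (k - c)))"
      using relk by simp
    also have "\<dots> = phi0 (M \<nu>)" unfolding sum.distrib partA partB by simp
    finally have "phi0 (M \<nu>) = 0" by simp
    then have "M \<nu> = 0" by (rule phi0_inj)
    then show False using Mnu by simp
  qed
qed

end



context S begin

lemma main: "\<exists>!b. gapped G b \<and> bounding_cochain G m b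
              \<and> T_sums (\<lambda>k. ext_mod G n one (replicate k b)) 0"
proof (rule ex1I[where a = bsol])
  have gb: "good bsol" by (rule bsol_good)
  have Db: "Dz bsol" by (rule bsol_Dz)
  have T1: "T_sums (\<lambda>k. ext_alg G m (replicate k bsol)) 0"
  proof (subst tsums_iff)
    show "\<And>c \<nu> k. \<nu> \<le> c \<Longrightarrow> N c < k \<Longrightarrow> ext_alg G m (replicate k bsol) \<nu> = 0"
      by (rule vp_alg[OF gb])
    show "\<forall>\<nu>. (\<Sum>k<N \<nu> + 2. ext_alg G m (replicate k bsol) \<nu>) = 0"
      using bounding[OF gb Db] by blast
  qed
  show "gapped G bsol \<and> bounding_cochain G m bsol \<and> T_sums (\<lambda>k. ext_mod G n one (replicate k bsol)) 0"
    using gb good_nov[OF gb] T1 Dz_iff[OF gb] Db unfolding good_def bounding_cochain_def by auto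
next
  fix b assume b: "gapped G b \<and> bounding_cochain G m b \<and> T_sums (\<lambda>k. ext_mod G n one (replicate k b)) 0"
  then have gb: "good b" unfolding good_def bounding_cochain_def by auto
  then have "Dz b" using b Dz_iff by blast
  then show "b = bsol" using uniq[OF gb bsol_good _ bsol_Dz] by blast
qed

end

theorem proposition3p5:
  fixes G :: "real set"
    and m :: "nat \<Rightarrow> real \<Rightarrow> 'c::ab_group_add list \<Rightarrow> 'c"
    and n :: "nat \<Rightarrow> real \<Rightarrow> 'd::ab_group_add \<Rightarrow> 'c list \<Rightarrow> 'd"
    and one :: "real \<Rightarrow> 'd"
  assumes char2C: "\<forall>v::'c. v + v = 0"
    and char2D: "\<forall>w::'d. w + w = 0"
    and G: "discrete_submonoid G"
    and alg: "ainf_alg G m"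
    and md: "ainf_mod G m n"
    and cyc: "cyclic_elem G n one"
    and onegap: "gapped G one"
  shows "\<exists>!b. gapped G b \<and> bounding_cochain G m b
              \<and> T_sums (\<lambda>k. ext_mod G n one (replicate k b)) 0"
proof -
  interpret S G m n one using char2D G md cyc onegap by unfold_locales
  show ?thesis by (rule main)
qed



end
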